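(* Let $k$ be a field, $n\ge2$, $R=k[x_1,\dots,x_n]$, and $I=(x_1^a,\dots,x_n^a,(x_1\cdots x_n)^b)$ with integers $0<b<a$. Then: (a) $J:=(x_1^a,\dots,x_n^a)$ is a minimal reduction of $I$ if and only if $nb\ge a$; in this case, letting $p$ be the smallest integer with $1\le p\le n$ and $pb\ge a$, one has $\operatorname{red}_J(I)=p-1$. (b) If $nb<a$, then $Q:=(x_1^a-x_n^a,\dots,x_{n-1}^a-x_n^a,(x_1\cdots x_n)^b)$ is a minimal reduction of $I$ and $\operatorname{red}_Q(I)=n-1$.
   Context: For ideals $J\subset I$, $J$ is a reduction of $I$ if $JI^{r}=I^{r+1}$ for some $r\ge0$; the least such $r$ is the reduction number $\operatorname{red}_J(I)$. *)

theory Defs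
  imports "HOL-Library.Poly_Mapping"
begin

text \<open>Polynomials over a coefficient ring: finitely supported maps from monomials
(exponent vectors) to coefficients. Variables are indexed 0,1,2,...;
the ring k[x_1,...,x_n] is the carrier of polynomials using only variables with index < n.\<close>

type_synonym 'k mpoly = "(nat \<Rightarrow>\<^sub>0 nat) \<Rightarrow>\<^sub>0 'k"

definition Var :: "nat \<Rightarrow> 'k::comm_ring_1 mpoly" where
  "Var i = Poly_Mapping.single (Poly_Mapping.single i 1) 1"

definition polys :: "nat \<Rightarrow> 'k::comm_ring_1 mpoly set" where
  "polys n = {p. \<forall>m \<in> Poly_Mapping.keys p. Poly_Mapping.keys (m::nat \<Rightarrow>\<^sub>0 nat) \<subseteq> {..<n}}"

definition is_ideal :: "nat \<Rightarrow> 'k::comm_ring_1 mpoly set \<Rightarrow> bool" where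
  "is_ideal n I \<longleftrightarrow> I \<subseteq> polys n \<and> 0 \<in> I \<and>
     (\<forall>x\<in>I. \<forall>y\<in>I. x + y \<in> I) \<and> (\<forall>r\<in>polys n. \<forall>x\<in>I. r * x \<in> I)"

definition gen_ideal :: "nat \<Rightarrow> 'k::comm_ring_1 mpoly set \<Rightarrow> 'k mpoly set" where
  "gen_ideal n S = \<Inter>{I. is_ideal n I \<and> S \<subseteq> I}"

definition ideal_prod :: "nat \<Rightarrow> 'k::comm_ring_1 mpoly set \<Rightarrow> 'k mpoly set \<Rightarrow> 'k mpoly set" where
  "ideal_prod n I J = gen_ideal n {x * y | x y. x \<in> I \<and> y \<in> J}"

fun ideal_pow :: "nat \<Rightarrow> 'k::comm_ring_1 mpoly set \<Rightarrow> nat \<Rightarrow> 'k mpoly set" where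
  "ideal_pow n I 0 = polys n"
| "ideal_pow n I (Suc r) = ideal_prod n I (ideal_pow n I r)"

definition is_reduction :: "nat \<Rightarrow> 'k::comm_ring_1 mpoly set \<Rightarrow> 'k mpoly set \<Rightarrow> bool" where
  "is_reduction n J I \<longleftrightarrow> is_ideal n J \<and> J \<subseteq> I \<and>
     (\<exists>r. ideal_prod n J (ideal_pow n I r) = ideal_pow n I (Suc r))"

definition red_num :: "nat \<Rightarrow> 'k::comm_ring_1 mpoly set \<Rightarrow> 'k mpoly set \<Rightarrow> nat" where
  "red_num n J I = (LEAST r. ideal_prod n J (ideal_pow n I r) = ideal_pow n I (Suc r))"

definition minimal_reduction :: "nat \<Rightarrow> 'k::comm_ring_1 mpoly set \<Rightarrow> 'k mpoly set \<Rightarrow> bool" where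
  "minimal_reduction n J I \<longleftrightarrow> is_reduction n J I \<and>
     (\<forall>K. is_reduction n K I \<and> K \<subseteq> J \<longrightarrow> K = J)"

end

theory Submission
  imports Defs
begin

abbreviation lk where "lk \<equiv> Poly_Mapping.lookup"
abbreviation ks where "ks \<equiv> Poly_Mapping.keys"

lemma keys_add_nat: "ks ((d::nat\<Rightarrow>\<^sub>0nat) + e) = ks d \<union> ks e"
  by (auto simp: in_keys_iff lookup_add)

lemma polys_iff: "p \<in> polys n \<longleftrightarrow> (\<forall>m\<in>ks p. ks m \<subseteq> {..<n})"
  by (simp add: polys_def)

lemma polys_0[simp]: "0 \<in> polys n" by (simp add: polys_def)

lemma polys_add: "p \<in> polys n \<Longrightarrow> q \<in> polys n \<Longrightarrow> p + q \<in> polys n"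
  unfolding polys_def using keys_add[of p q] by auto

lemma polys_uminus: "p \<in> polys n \<Longrightarrow> - p \<in> polys n"
  unfolding polys_def by (auto simp: in_keys_iff)

lemma polys_diff: "p \<in> polys n \<Longrightarrow> q \<in> polys n \<Longrightarrow> p - q \<in> polys n"
  unfolding diff_conv_add_uminus by (intro polys_add polys_uminus)

lemma polys_mult: "p \<in> polys n \<Longrightarrow> q \<in> polys n \<Longrightarrow> p * q \<in> polys n"
proof (unfold polys_def, safe)
  fix m x assume p: "\<forall>m\<in>Poly_Mapping.keys p. Poly_Mapping.keys m \<subseteq> {..<n}"
    and q: "\<forall>m\<in>Poly_Mapping.keys q. Poly_Mapping.keys m \<subseteq> {..<n}"
    and m: "m \<in> Poly_Mapping.keys (p * q)" and x: "x \<in> Poly_Mapping.keys m"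
  from keys_mult[of p q] m obtain a b where "m = a + b" "a \<in> Poly_Mapping.keys p" "b \<in> Poly_Mapping.keys q" by auto
  thus "x < n" using p q x by (auto simp: keys_add_nat)
qed
lemma polys_single: "ks e \<subseteq> {..<n} \<Longrightarrow> Poly_Mapping.single e c \<in> polys n"
  unfolding polys_def by auto

lemma polys_one[simp]: "1 \<in> polys n" by (simp add: polys_def)

lemma polys_sum: "(\<And>i. i \<in> A \<Longrightarrow> f i \<in> polys n) \<Longrightarrow> sum f A \<in> polys n"
  by (induction A rule: infinite_finite_induct) (auto intro: polys_add)

lemma polys_prod: "(\<And>i. i \<in> A \<Longrightarrow> f i \<in> polys n) \<Longrightarrow> prod f A \<in> polys n"
  by (induction A rule: infinite_finite_induct) (auto intro: polys_mult)

lemma polys_power: "p \<in> polys n \<Longrightarrow> p ^ k \<in> polys n"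
  by (induction k) (auto intro: polys_mult)

lemma is_ideal_polys: "is_ideal n (polys n)"
  by (auto simp: is_ideal_def intro: polys_add polys_mult)

lemma ideal_sub: "is_ideal n I \<Longrightarrow> I \<subseteq> polys n" by (simp add: is_ideal_def)
lemma ideal_0: "is_ideal n I \<Longrightarrow> 0 \<in> I" by (simp add: is_ideal_def)
lemma ideal_add: "is_ideal n I \<Longrightarrow> x \<in> I \<Longrightarrow> y \<in> I \<Longrightarrow> x + y \<in> I" by (simp add: is_ideal_def)
lemma ideal_mult: "is_ideal n I \<Longrightarrow> r \<in> polys n \<Longrightarrow> x \<in> I \<Longrightarrow> r * x \<in> I" by (simp add: is_ideal_def)
lemma ideal_mult2: "is_ideal n I \<Longrightarrow> r \<in> polys n \<Longrightarrow> x \<in> I \<Longrightarrow> x * r \<in> I"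
  by (metis ideal_mult mult.commute)
lemma ideal_uminus: "is_ideal n I \<Longrightarrow> x \<in> I \<Longrightarrow> - x \<in> I"
proof -
  assume a: "is_ideal n I" "x \<in> I"
  have "(-1) * x \<in> I" by (rule ideal_mult[OF a(1) _ a(2)]) (rule polys_uminus[OF polys_one])
  thus ?thesis by simp
qed
lemma ideal_diff: "is_ideal n I \<Longrightarrow> x \<in> I \<Longrightarrow> y \<in> I \<Longrightarrow> x - y \<in> I"
  unfolding diff_conv_add_uminus by (intro ideal_add ideal_uminus)
lemma ideal_sum: "is_ideal n I \<Longrightarrow> (\<And>i. i \<in> A \<Longrightarrow> f i \<in> I) \<Longrightarrow> sum f A \<in> I"
  by (induction A rule: infinite_finite_induct) (auto intro: ideal_add ideal_0)

lemma gen_ideal_ideal: "S \<subseteq> polys n \<Longrightarrow> is_ideal n (gen_ideal n S)"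
  unfolding gen_ideal_def is_ideal_def using is_ideal_polys[of n]
  by (auto simp: is_ideal_def)

lemma gen_ideal_base: "S \<subseteq> gen_ideal n S"
  unfolding gen_ideal_def by auto

lemma gen_ideal_least: "is_ideal n I \<Longrightarrow> S \<subseteq> I \<Longrightarrow> gen_ideal n S \<subseteq> I"
  unfolding gen_ideal_def by auto

lemma ideal_prod_ideal: "is_ideal n A \<Longrightarrow> is_ideal n B \<Longrightarrow> is_ideal n (ideal_prod n A B)"
  unfolding ideal_prod_def
proof (rule gen_ideal_ideal, safe)
  fix x y assume "is_ideal n A" "is_ideal n B" "x \<in> A" "y \<in> B"
  thus "x * y \<in> polys n" using ideal_sub[of n A] ideal_sub[of n B] by (intro polys_mult) auto
qed

lemma ideal_prod_mem: "x \<in> A \<Longrightarrow> y \<in> B \<Longrightarrow> x * y \<in> ideal_prod n A B"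
  unfolding ideal_prod_def by (rule subsetD[OF gen_ideal_base]) auto

lemma ideal_prod_least: "is_ideal n M \<Longrightarrow> (\<And>x y. x \<in> A \<Longrightarrow> y \<in> B \<Longrightarrow> x * y \<in> M) \<Longrightarrow> ideal_prod n A B \<subseteq> M"
  unfolding ideal_prod_def by (rule gen_ideal_least) auto

lemma ideal_pow_ideal: "is_ideal n I \<Longrightarrow> is_ideal n (ideal_pow n I r)"
  by (induction r) (simp_all add: ideal_prod_ideal is_ideal_polys)

lemma ideal_prod_sub_left: "is_ideal n A \<Longrightarrow> is_ideal n B \<Longrightarrow> ideal_prod n A B \<subseteq> A"
  by (rule ideal_prod_least) (auto intro: ideal_mult2 dest: ideal_sub)

lemma ideal_prod_sub_right: "is_ideal n A \<Longrightarrow> is_ideal n B \<Longrightarrow> ideal_prod n A B \<subseteq> B"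
  by (rule ideal_prod_least) (auto intro: ideal_mult dest: ideal_sub)

lemma ideal_prod_mono: "is_ideal n A' \<Longrightarrow> is_ideal n B' \<Longrightarrow> A \<subseteq> A' \<Longrightarrow> B \<subseteq> B' \<Longrightarrow> ideal_prod n A B \<subseteq> ideal_prod n A' B'"
  by (rule ideal_prod_least) (auto intro: ideal_prod_ideal ideal_prod_mem)

lemma gen_ideal_mult_closed:
  assumes M: "is_ideal n M" and S: "S \<subseteq> polys n" and T: "T \<subseteq> polys n"
    and st: "\<And>s t. s \<in> S \<Longrightarrow> t \<in> T \<Longrightarrow> s * t \<in> M"
    and x: "x \<in> gen_ideal n S" and y: "y \<in> gen_ideal n T"
  shows "x * y \<in> M"
proof -
  have 1: "gen_ideal n T \<subseteq> {y \<in> polys n. s * y \<in> M}" if s: "s \<in> S" for s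
  proof (rule gen_ideal_least)
    show "is_ideal n {y \<in> polys n. s * y \<in> M}"
      unfolding is_ideal_def using M
      by (auto intro: polys_add polys_mult ideal_0 simp: distrib_left ideal_add)
         (metis ideal_mult mult.left_commute)
    show "T \<subseteq> {y \<in> polys n. s * y \<in> M}" using T st s by auto
  qed
  have "gen_ideal n S \<subseteq> {x \<in> polys n. \<forall>y \<in> gen_ideal n T. x * y \<in> M}"
  proof (rule gen_ideal_least)
    show "is_ideal n {x \<in> polys n. \<forall>y \<in> gen_ideal n T. x * y \<in> M}"
      unfolding is_ideal_def using M
      by (auto intro: polys_add polys_mult ideal_0 simp: distrib_right ideal_add)
         (metis ideal_mult mult.assoc)
    show "S \<subseteq> {x \<in> polys n. \<forall>y \<in> gen_ideal n T. x * y \<in> M}" using S 1 by auto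
  qed
  thus ?thesis using x y by auto
qed

definition X :: "(nat \<Rightarrow>\<^sub>0 nat) \<Rightarrow> 'k::comm_ring_1 mpoly" where
  "X e = Poly_Mapping.single e 1"
definition C :: "'k \<Rightarrow> 'k::comm_ring_1 mpoly" where
  "C c = Poly_Mapping.single 0 c"

lemma X_mult: "X d * X e = X (d + e)"
  by (simp add: X_def mult_single)

lemma X_0: "X 0 = 1" by (simp add: X_def)

lemma lookup_X: "lk (X e) d = (if d = e then 1 else 0)"
  by (simp add: X_def lookup_single)

lemma keys_X[simp]: "ks (X e :: 'k::comm_ring_1 mpoly) = {e}"
  by (simp add: X_def)


lemma polys_X: "ks e \<subseteq> {..<n} \<Longrightarrow> X e \<in> polys n"
  by (simp add: X_def polys_single)

lemma polys_C: "C c \<in> polys n"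
  by (simp add: C_def polys_single)

lemma lookup_C_mult: "lk (C c * p) e = c * lk p e"
proof -
  have "C c * p = Poly_Mapping.map ((*) c) p" by (simp add: C_def mult_map_scale_conv_mult)
  thus ?thesis by (simp add: map.rep_eq when_def)
qed

lemma poly_decomp: "p = (\<Sum>d\<in>ks p. Poly_Mapping.single d (lk p d))"
proof (rule poly_mapping_eqI)
  fix e
  have "lk (\<Sum>d\<in>ks p. Poly_Mapping.single d (lk p d)) e = (\<Sum>d\<in>ks p. lk (Poly_Mapping.single d (lk p d)) e)"
    by (simp add: lookup_sum)
  also have "\<dots> = (\<Sum>d\<in>ks p. if d = e then lk p d else 0)"
    by (rule sum.cong) (auto simp: lookup_single)
  also have "\<dots> = lk p e"
    by (auto simp: in_keys_iff)
  finally show "lk p e = lk (\<Sum>d\<in>ks p. Poly_Mapping.single d (lk p d)) e" by simp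
qed

definition Phi :: "((nat \<Rightarrow>\<^sub>0 nat) \<Rightarrow> 'k) \<Rightarrow> 'k::comm_ring_1 mpoly \<Rightarrow> 'k" where
  "Phi F p = (\<Sum>e\<in>ks p. lk p e * F e)"

lemma Phi_superset: "finite A \<Longrightarrow> ks p \<subseteq> A \<Longrightarrow> Phi F p = (\<Sum>e\<in>A. lk p e * F e)"
  unfolding Phi_def by (rule sum.mono_neutral_left) (auto simp: in_keys_iff)

lemma Phi_add: "Phi F (p + q) = Phi F p + Phi F q"
proof -
  let ?A = "ks p \<union> ks q"
  have "Phi F (p + q) = (\<Sum>e\<in>?A. lk (p+q) e * F e)"
    by (rule Phi_superset) (use keys_add[of p q] in auto)
  also have "\<dots> = (\<Sum>e\<in>?A. lk p e * F e) + (\<Sum>e\<in>?A. lk q e * F e)"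
    by (simp add: lookup_add distrib_right sum.distrib)
  also have "\<dots> = Phi F p + Phi F q"
    by (simp add: Phi_superset[of ?A p F] Phi_superset[of ?A q F])
  finally show ?thesis .
qed

lemma Phi_0[simp]: "Phi F 0 = 0" by (simp add: Phi_def)

lemma Phi_sum: "Phi F (sum f A) = (\<Sum>i\<in>A. Phi F (f i))"
  by (induction A rule: infinite_finite_induct) (simp_all add: Phi_add)

lemma Phi_single: "Phi F (Poly_Mapping.single e c) = c * F e"
  by (simp add: Phi_def)

lemma Phi_X: "Phi F (X e) = F e"
  by (simp add: X_def Phi_single)

lemma Phi_C_mult: "Phi F (C c * p) = c * Phi F p"
proof -
  have "Phi F (C c * p) = (\<Sum>e\<in>ks p. lk (C c * p) e * F e)"
    by (rule Phi_superset) (auto simp: in_keys_iff lookup_C_mult)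
  thus ?thesis by (simp add: Phi_def lookup_C_mult sum_distrib_left mult.assoc)
qed

lemma Phi_uminus: "Phi F (- p) = - Phi F p"
  by (simp add: Phi_def sum_negf)

lemma Phi_diff: "Phi F (p - q) = Phi F p - Phi F q"
  by (simp add: diff_conv_add_uminus Phi_add Phi_uminus del: add_uminus_conv_diff)

lemma mult_decomp: "p * q = (\<Sum>d\<in>ks p. \<Sum>d'\<in>ks q. Poly_Mapping.single (d + d') (lk p d * lk q d'))"
proof -
  have "p * q = (\<Sum>d\<in>ks p. Poly_Mapping.single d (lk p d)) * (\<Sum>d'\<in>ks q. Poly_Mapping.single d' (lk q d'))"
    using poly_decomp[of p] poly_decomp[of q] by simp
  also have "\<dots> = (\<Sum>d\<in>ks p. \<Sum>d'\<in>ks q. Poly_Mapping.single d (lk p d) * Poly_Mapping.single d' (lk q d'))"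
    by (simp add: sum_product)
  finally show ?thesis by (simp add: mult_single)
qed

lemma Phi_mult: "Phi F (p * q) = (\<Sum>d\<in>ks p. \<Sum>d'\<in>ks q. lk p d * lk q d' * F (d + d'))"
  by (subst mult_decomp) (simp add: Phi_sum Phi_single)

lemma lookup_mult_sum: "lk (p * (q::'k::comm_ring_1 mpoly)) e = (\<Sum>d\<in>ks p. \<Sum>d'\<in>ks q. if d + d' = e then lk p d * lk q d' else 0)"
proof -
  have "lk (p * q) e = Phi (\<lambda>x. if x = e then 1 else 0) (p * q)"
    by (cases "e \<in> ks (p*q)") (simp_all add: Phi_def in_keys_iff if_distrib sum.delta cong: if_cong)
  thus ?thesis by (simp add: Phi_mult if_distrib cong: if_cong)
qed

definition emb :: "nat \<Rightarrow> (nat \<Rightarrow> nat) \<Rightarrow> (nat \<Rightarrow>\<^sub>0 nat)" where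
  "emb n v = (\<Sum>i<n. Poly_Mapping.single i (v i))"

lemma lookup_emb: "lk (emb n v) i = (if i < n then v i else 0)"
  unfolding emb_def lookup_sum by (auto simp: lookup_single when_def)

lemma keys_emb: "ks (emb n v) \<subseteq> {..<n}"
  by (auto simp: in_keys_iff lookup_emb split: if_splits)

lemma emb_add: "emb n v + emb n v' = emb n (\<lambda>i. v i + v' i)"
  by (rule poly_mapping_eqI) (simp add: lookup_add lookup_emb)

lemma emb_cong: "(\<And>i. i < n \<Longrightarrow> v i = v' i) \<Longrightarrow> emb n v = emb n v'"
  by (rule poly_mapping_eqI) (simp add: lookup_emb)

lemma mono_emb: "ks e \<subseteq> {..<n} \<Longrightarrow> e = emb n (lk e)"
  by (rule poly_mapping_eqI) (auto simp: lookup_emb in_keys_iff)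

lemma single_emb: "i < n \<Longrightarrow> Poly_Mapping.single i k = emb n (\<lambda>j. if j = i then k else 0)"
  by (rule poly_mapping_eqI) (auto simp: lookup_emb lookup_single when_def)

lemma emb_zero: "emb n (\<lambda>_. 0) = 0"
  by (rule poly_mapping_eqI) (simp add: lookup_emb)

lemma emb_eq_iff: "emb n v = emb n v' \<longleftrightarrow> (\<forall>i<n. v i = v' i)"
proof
  assume h: "emb n v = emb n v'"
  show "\<forall>i<n. v i = v' i"
  proof (intro allI impI)
    fix i assume "i < n"
    have "lk (emb n v) i = lk (emb n v') i" using h by simp
    thus "v i = v' i" using \<open>i < n\<close> by (simp add: lookup_emb)
  qed
qed (rule emb_cong, simp)

definition wt :: "nat \<Rightarrow> (nat \<Rightarrow> nat) \<Rightarrow> (nat \<Rightarrow>\<^sub>0 nat) \<Rightarrow> nat" where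
  "wt n w e = (\<Sum>i<n. w i * lk e i)"

lemma wt_add: "wt n w (d + e) = wt n w d + wt n w e"
  by (simp add: wt_def lookup_add distrib_left sum.distrib)

lemma wt_emb: "wt n w (emb n v) = (\<Sum>i<n. w i * v i)"
  by (simp add: wt_def lookup_emb)

lemma wt_single: "i < n \<Longrightarrow> wt n w (Poly_Mapping.single i k) = w i * k"
proof -
  assume i: "i < n"
  have "wt n w (Poly_Mapping.single i k) = (\<Sum>j<n. if i = j then w i * k else 0)"
    unfolding wt_def by (rule sum.cong) (auto simp: lookup_single when_def)
  thus ?thesis using i by simp
qed

definition mle :: "(nat \<Rightarrow>\<^sub>0 nat) \<Rightarrow> (nat \<Rightarrow>\<^sub>0 nat) \<Rightarrow> bool" where
  "mle d e \<longleftrightarrow> (\<forall>i. lk d i \<le> lk e i)"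

lemma mle_split: "mle d e \<Longrightarrow> e = d + (e - d)"
  by (rule poly_mapping_eqI) (simp add: mle_def lookup_add lookup_minus)

lemma mle_add: "mle d e \<Longrightarrow> mle d (e + e')"
  by (auto simp: mle_def lookup_add intro: le_add1 order_trans)

lemma mle_add2: "mle d e \<Longrightarrow> mle d' e' \<Longrightarrow> mle (d + d') (e + e')"
  by (auto simp: mle_def lookup_add intro: add_mono)

lemma wt_mono: "mle d e \<Longrightarrow> wt n w d \<le> wt n w e"
  unfolding wt_def mle_def by (intro sum_mono mult_left_mono) auto

lemma wt_strict: assumes "mle d e" "d \<noteq> e" "ks e \<subseteq> {..<n}" "\<forall>i<n. 0 < w i"
  shows "wt n w d < wt n w e"
proof -
  obtain i where i: "lk d i \<noteq> lk e i" using assms(2) by (auto simp: poly_mapping_eq_iff fun_eq_iff)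
  with assms(1) have lt: "lk d i < lk e i" by (simp add: mle_def le_neq_implies_less)
  hence "i \<in> ks e" by (auto simp: in_keys_iff)
  hence "i < n" using assms(3) by auto
  show ?thesis unfolding wt_def
  proof (rule sum_strict_mono_ex1)
    show "\<forall>x\<in>{..<n}. w x * lk d x \<le> w x * lk e x" using assms(1) by (auto simp: mle_def)
    show "\<exists>a\<in>{..<n}. w a * lk d a < w a * lk e a" using \<open>i < n\<close> lt assms(4) by auto
  qed simp
qed

lemma mle_wt_eq: "mle d e \<Longrightarrow> ks e \<subseteq> {..<n} \<Longrightarrow> \<forall>i<n. 0 < w i \<Longrightarrow> wt n w e \<le> wt n w d \<Longrightarrow> d = e"
proof (rule ccontr)
  assume "mle d e" "ks e \<subseteq> {..<n}" "\<forall>i<n. 0 < w i" "wt n w e \<le> wt n w d" "d \<noteq> e"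
  thus False using wt_strict[of d e n w] by simp
qed

lemma keys_sub_add: "ks (d + e :: nat \<Rightarrow>\<^sub>0 nat) \<subseteq> A \<longleftrightarrow> ks d \<subseteq> A \<and> ks e \<subseteq> A"
  by (simp add: keys_add_nat)

lemma keys_mle: "mle d e \<Longrightarrow> ks d \<subseteq> ks e"
proof
  fix x assume "mle d e" "x \<in> ks d"
  hence "lk d x \<le> lk e x" "lk d x \<noteq> 0" by (auto simp: mle_def in_keys_iff)
  thus "x \<in> ks e" by (simp add: in_keys_iff)
qed

definition pw :: "nat \<Rightarrow> nat \<Rightarrow> 'k::comm_ring_1 mpoly" where
  "pw i k = X (Poly_Mapping.single i k)"

definition fm :: "nat \<Rightarrow> nat \<Rightarrow> 'k::comm_ring_1 mpoly" where
  "fm n b = X (emb n (\<lambda>_. b))"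

lemma Var_pw: "Var i ^ k = pw i k"
  by (induction k) (simp_all add: pw_def Var_def X_def[symmetric] X_0 X_mult single_add[symmetric] add.commute)

lemma prod_Var: "(\<Prod>i<n. Var i) = X (emb n (\<lambda>_. 1))"
proof (induction n)
  case 0 thus ?case by (simp add: emb_def X_0)
next
  case (Suc n)
  have "emb (Suc n) (\<lambda>_. 1) = emb n (\<lambda>_. 1) + Poly_Mapping.single n 1" by (simp add: emb_def)
  thus ?case using Suc by (simp add: Var_def X_def[symmetric] X_mult)
qed

lemma X_emb_pow: "X (emb n v) ^ k = X (emb n (\<lambda>i. k * v i))"
  by (induction k) (simp_all add: X_0 emb_zero X_mult emb_add)

lemma f_fm: "(\<Prod>i<n. Var i) ^ b = fm n b"
  by (simp add: prod_Var X_emb_pow fm_def)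

lemma pw_mult: "pw i k * pw i k' = pw i (k + k')"
  by (simp add: pw_def X_mult single_add)

lemma pw_power: "pw i k ^ m = pw i (m * k)"
  by (induction m) (simp_all add: pw_def X_0 X_mult single_add)

lemma polys_pw: "i < n \<Longrightarrow> pw i k \<in> polys n"
  by (simp add: pw_def polys_X)

lemma polys_fm: "fm n b \<in> polys n"
  by (simp add: fm_def polys_X keys_emb)

definition supp_set :: "nat \<Rightarrow> (nat \<Rightarrow>\<^sub>0 nat) set \<Rightarrow> 'k::comm_ring_1 mpoly set" where
  "supp_set n U = {p \<in> polys n. ks p \<subseteq> U}"

lemma supp_ideal:
  assumes up: "\<And>d e. d \<in> U \<Longrightarrow> d + e \<in> U"
  shows "is_ideal n (supp_set n U)"
  unfolding is_ideal_def supp_set_def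
proof (intro conjI ballI)
  fix x y :: "'a mpoly" assume "x \<in> {p \<in> polys n. ks p \<subseteq> U}" "y \<in> {p \<in> polys n. ks p \<subseteq> U}"
  thus "x + y \<in> {p \<in> polys n. ks p \<subseteq> U}" using keys_add[of x y] by (auto intro: polys_add)
next
  fix r x :: "'a mpoly" assume r: "r \<in> polys n" and x: "x \<in> {p \<in> polys n. ks p \<subseteq> U}"
  have "ks (r * x) \<subseteq> U"
  proof
    fix m assume "m \<in> ks (r * x)"
    then obtain d d' where "m = d + d'" "d \<in> ks r" "d' \<in> ks x" using keys_mult[of r x] by auto
    thus "m \<in> U" using x up[of d' d] by (auto simp: add.commute)
  qed
  thus "r * x \<in> {p \<in> polys n. ks p \<subseteq> U}" using r x by (auto intro: polys_mult)
qed auto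

lemma supp_setI: "p \<in> polys n \<Longrightarrow> ks p \<subseteq> U \<Longrightarrow> p \<in> supp_set n U"
  by (simp add: supp_set_def)

lemma supp_setD: "p \<in> supp_set n U \<Longrightarrow> d \<in> ks p \<Longrightarrow> d \<in> U"
  by (auto simp: supp_set_def)

lemma supp_set_prod:
  assumes up: "\<And>d e. d \<in> W \<Longrightarrow> d + e \<in> W"
    and A: "A \<subseteq> supp_set n U" and B: "B \<subseteq> supp_set n V"
    and UV: "\<And>d d'. d \<in> U \<Longrightarrow> d' \<in> V \<Longrightarrow> d + d' \<in> W"
  shows "ideal_prod n A B \<subseteq> supp_set n W"
proof (rule ideal_prod_least[OF supp_ideal[OF up]])
  fix x y assume x: "x \<in> A" and y: "y \<in> B"
  have "ks (x * y) \<subseteq> W"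
  proof
    fix m assume "m \<in> ks (x * y)"
    then obtain d d' where "m = d + d'" "d \<in> ks x" "d' \<in> ks y" using keys_mult[of x y] by auto
    moreover have "d \<in> U" using \<open>d \<in> ks x\<close> x A by (auto simp: supp_set_def)
    moreover have "d' \<in> V" using \<open>d' \<in> ks y\<close> y B by (auto simp: supp_set_def)
    ultimately show "m \<in> W" using UV by simp
  qed
  moreover have "x * y \<in> polys n" using x y A B by (auto simp: supp_set_def intro: polys_mult)
  ultimately show "x * y \<in> supp_set n W" by (simp add: supp_set_def)
qed

definition Bset :: "nat \<Rightarrow> nat \<Rightarrow> nat \<Rightarrow> nat \<Rightarrow> nat \<Rightarrow> (nat \<Rightarrow>\<^sub>0 nat) set" where
  "Bset n a b r s = {e. \<exists>c j. sum c {..<n} + j = r \<and> s \<le> sum c {..<n} \<and> mle (emb n (\<lambda>i. a * c i + b * j)) e}"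

lemma Bset_up: "d \<in> Bset n a b r s \<Longrightarrow> d + e \<in> Bset n a b r s"
  unfolding Bset_def using mle_add by blast

lemma Bset_add: assumes "d \<in> Bset n a b r s" "d' \<in> Bset n a b r' s'"
  shows "d + d' \<in> Bset n a b (r + r') (s + s')"
proof -
  obtain c j where 1: "sum c {..<n} + j = r" "s \<le> sum c {..<n}" "mle (emb n (\<lambda>i. a * c i + b * j)) d"
    using assms(1) unfolding Bset_def by auto
  obtain c' j' where 2: "sum c' {..<n} + j' = r'" "s' \<le> sum c' {..<n}" "mle (emb n (\<lambda>i. a * c' i + b * j')) d'"
    using assms(2) unfolding Bset_def by auto
  have "mle (emb n (\<lambda>i. a * c i + b * j) + emb n (\<lambda>i. a * c' i + b * j')) (d + d')"
    using 1 2 by (intro mle_add2)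
  moreover have "emb n (\<lambda>i. a * c i + b * j) + emb n (\<lambda>i. a * c' i + b * j') = emb n (\<lambda>i. a * (c i + c' i) + b * (j + j'))"
    by (simp add: emb_add algebra_simps)
  moreover have "sum (\<lambda>i. c i + c' i) {..<n} = sum c {..<n} + sum c' {..<n}" by (simp add: sum.distrib)
  ultimately show ?thesis unfolding Bset_def using 1 2
    by (intro CollectI exI[of _ "\<lambda>i. c i + c' i"] exI[of _ "j + j'"]) auto
qed

definition delta :: "nat \<Rightarrow> nat \<Rightarrow> nat" where "delta i j = (if j = i then 1 else 0)"

lemma sum_delta: "i < n \<Longrightarrow> sum (delta i) {..<n} = 1"
  by (simp add: delta_def)

lemma single_emb_delta: "i < n \<Longrightarrow> Poly_Mapping.single i a = emb n (\<lambda>j. a * delta i j + b * 0)"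
  by (simp add: single_emb delta_def, rule emb_cong, simp)

definition GI :: "nat \<Rightarrow> nat \<Rightarrow> nat \<Rightarrow> 'k::comm_ring_1 mpoly set" where
  "GI n a b = (\<lambda>i. pw i a) ` {..<n} \<union> {fm n b}"

definition GJ :: "nat \<Rightarrow> nat \<Rightarrow> 'k::comm_ring_1 mpoly set" where
  "GJ n a = (\<lambda>i. pw i a) ` {..<n}"

lemma GI_polys: "GI n a b \<subseteq> polys n"
  by (auto simp: GI_def polys_pw polys_fm)

lemma GJ_polys: "GJ n a \<subseteq> polys n"
  by (auto simp: GJ_def polys_pw)

lemma pw_in_Bset: "i < n \<Longrightarrow> Poly_Mapping.single i a \<in> Bset n a b 1 1"
  unfolding Bset_def
  by (rule CollectI, rule exI[of _ "delta i"], rule exI[of _ 0])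
     (simp add: sum_delta single_emb_delta[of i n a b] mle_def)

lemma fm_in_Bset: "emb n (\<lambda>_. b) \<in> Bset n a b 1 0"
  unfolding Bset_def
  by (rule CollectI, rule exI[of _ "\<lambda>_. 0"], rule exI[of _ 1]) (simp add: mle_def)

lemma Bset_mono_s: "e \<in> Bset n a b r s \<Longrightarrow> s' \<le> s \<Longrightarrow> e \<in> Bset n a b r s'"
  unfolding Bset_def by (auto intro: le_trans)

lemma I_supp: "gen_ideal n (GI n a b) \<subseteq> supp_set n (Bset n a b 1 0)"
proof (rule gen_ideal_least[OF supp_ideal[OF Bset_up]])
  show "GI n a b \<subseteq> supp_set n (Bset n a b 1 0)"
    using pw_in_Bset[THEN Bset_mono_s] fm_in_Bset
    by (auto simp: GI_def supp_set_def pw_def fm_def polys_X keys_emb)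
qed

lemma J_supp: "gen_ideal n (GJ n a) \<subseteq> supp_set n (Bset n a b 1 1)"
proof (rule gen_ideal_least[OF supp_ideal[OF Bset_up]])
  show "GJ n a \<subseteq> supp_set n (Bset n a b 1 1)"
    using pw_in_Bset by (auto simp: GJ_def supp_set_def pw_def polys_X)
qed

lemma Bset_0: "e \<in> Bset n a b 0 0"
  unfolding Bset_def
  by (rule CollectI, rule exI[of _ "\<lambda>_. 0"], rule exI[of _ 0]) (simp add: mle_def lookup_emb)

lemma Ipow_supp: "ideal_pow n (gen_ideal n (GI n a b)) r \<subseteq> supp_set n (Bset n a b r 0)"
proof (induction r)
  case 0 thus ?case by (auto simp: supp_set_def Bset_0)
next
  case (Suc r)
  show ?case unfolding ideal_pow.simps
    by (rule supp_set_prod[OF Bset_up I_supp Suc]) (use Bset_add[of _ n a b 1 0 _ r 0] in auto)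
qed

lemma JIpow_supp: "ideal_prod n (gen_ideal n (GJ n a)) (ideal_pow n (gen_ideal n (GI n a b)) r) \<subseteq> supp_set n (Bset n a b (Suc r) 1)"
  by (rule supp_set_prod[OF Bset_up J_supp Ipow_supp]) (use Bset_add[of _ n a b 1 1 _ r 0] in auto)

abbreviation Iid :: "nat \<Rightarrow> nat \<Rightarrow> nat \<Rightarrow> 'k::comm_ring_1 mpoly set" where
  "Iid n a b \<equiv> gen_ideal n (GI n a b)"
abbreviation Jid :: "nat \<Rightarrow> nat \<Rightarrow> 'k::comm_ring_1 mpoly set" where
  "Jid n a \<equiv> gen_ideal n (GJ n a)"

lemma Iid_ideal: "is_ideal n (Iid n a b)" by (rule gen_ideal_ideal[OF GI_polys])
lemma Jid_ideal: "is_ideal n (Jid n a)" by (rule gen_ideal_ideal[OF GJ_polys])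
lemma Ipow_ideal: "is_ideal n (ideal_pow n (Iid n a b) r)" by (rule ideal_pow_ideal[OF Iid_ideal])

lemma pw_in_I: "i < n \<Longrightarrow> pw i a \<in> Iid n a b"
  using gen_ideal_base[of "GI n a b" n] by (auto simp: GI_def)
lemma fm_in_I: "fm n b \<in> Iid n a b"
  using gen_ideal_base[of "GI n a b" n] by (auto simp: GI_def)
lemma pw_in_J: "i < n \<Longrightarrow> pw i a \<in> Jid n a"
  using gen_ideal_base[of "GJ n a" n] by (auto simp: GJ_def)

lemma J_sub_I: "Jid n a \<subseteq> Iid n a b"
  by (rule gen_ideal_least[OF Iid_ideal]) (auto simp: GJ_def pw_in_I)

lemma sum_pos_ex: "0 < sum (c::nat \<Rightarrow> nat) {..<n} \<Longrightarrow> \<exists>i<n. 0 < c i"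
  by (metis lessThan_iff neq0_conv sum.neutral)



lemma X_emb_mult: "X (emb n v) * X (emb n v') = X (emb n (\<lambda>i. v i + v' i))"
  by (simp add: X_mult emb_add)

lemma MI: "sum c {..<n} + j = r \<Longrightarrow> (X (emb n (\<lambda>i. a * c i + b * j)) :: 'k::comm_ring_1 mpoly) \<in> ideal_pow n (Iid n a b) r"
proof (induction r arbitrary: c j)
  case 0
  hence "\<forall>i<n. c i = 0" "j = 0" by auto
  hence "emb n (\<lambda>i. a * c i + b * j) = emb n (\<lambda>_. 0)" by (intro emb_cong) simp
  hence e: "X (emb n (\<lambda>i. a * c i + b * j)) = 1" by (simp only: emb_zero X_0)
  show ?case apply (simp only: e ideal_pow.simps) by (rule polys_one)
next
  case (Suc r)
  show ?case
  proof (cases "j = 0")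
    case False
    have "(X (emb n (\<lambda>i. a * c i + b * j)) :: 'k mpoly) = fm n b * X (emb n (\<lambda>i. a * c i + b * (j - 1)))"
      unfolding fm_def X_emb_mult
    proof (rule arg_cong[where f = X], rule emb_cong)
      have "b * j = b + b * (j - 1)" using False by (cases j) auto
      thus "a * c i + b * j = b + (a * c i + b * (j - 1))" for i by simp
    qed
    moreover have "(X (emb n (\<lambda>i. a * c i + b * (j - 1))) :: 'k mpoly) \<in> ideal_pow n (Iid n a b) r"
      using Suc.IH[of c "j - 1"] Suc.prems False by simp
    ultimately show ?thesis by (simp only: ideal_pow.simps) (metis ideal_prod_mem fm_in_I)
  next
    case True
    with Suc obtain i where i: "i < n" "0 < c i" using sum_pos_ex[of c n] by auto
    define c' where "c' = c(i := c i - 1)"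
    have cc: "\<And>k. c k = c' k + delta i k" using i by (simp add: c'_def delta_def)
    have "sum c {..<n} = sum c' {..<n} + 1" using i by (simp add: cc sum.distrib sum_delta)
    hence sc: "sum c' {..<n} + 0 = r" using Suc True by simp
    have "(X (emb n (\<lambda>i. a * c i + b * j)) :: 'k mpoly) = pw i a * X (emb n (\<lambda>i. a * c' i + b * 0))"
      unfolding pw_def single_emb_delta[OF i(1), of a b] X_emb_mult
      by (rule arg_cong[where f = X], rule emb_cong) (simp add: cc True algebra_simps)
    moreover have "(X (emb n (\<lambda>i. a * c' i + b * 0)) :: 'k mpoly) \<in> ideal_pow n (Iid n a b) r"
      using Suc.IH[OF sc] .
    ultimately show ?thesis using i by (simp only: ideal_pow.simps) (metis ideal_prod_mem pw_in_I)
  qed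
qed

fun Gp :: "'k::comm_ring_1 mpoly set \<Rightarrow> nat \<Rightarrow> 'k mpoly set" where
  "Gp S 0 = {1}"
| "Gp S (Suc r) = {s * g | s g. s \<in> S \<and> g \<in> Gp S r}"

lemma Gp_polys: "S \<subseteq> polys n \<Longrightarrow> Gp S r \<subseteq> polys n"
  by (induction r) (auto intro: polys_mult)

lemma pow_gen: assumes S: "S \<subseteq> polys n"
  shows "ideal_pow n (gen_ideal n S) r \<subseteq> gen_ideal n (Gp S r)"
proof (induction r)
  case 0
  show ?case
  proof
    fix p assume "p \<in> ideal_pow n (gen_ideal n S) 0"
    hence p: "p \<in> polys n" by simp
    have "p * 1 \<in> gen_ideal n (Gp S 0)"
      using gen_ideal_ideal[OF Gp_polys[OF S, of 0]] gen_ideal_base[of "Gp S 0" n]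
      by (intro ideal_mult[OF _ p]) auto
    thus "p \<in> gen_ideal n (Gp S 0)" by simp
  qed
next
  case (Suc r)
  show ?case unfolding ideal_pow.simps
  proof (rule ideal_prod_least[OF gen_ideal_ideal[OF Gp_polys[OF S]]])
    fix x y assume x: "x \<in> gen_ideal n S" and y: "y \<in> ideal_pow n (gen_ideal n S) r"
    show "x * y \<in> gen_ideal n (Gp S (Suc r))"
    proof (rule gen_ideal_mult_closed[OF gen_ideal_ideal[OF Gp_polys[OF S]] S Gp_polys[OF S] _ x])
      show "y \<in> gen_ideal n (Gp S r)" using y Suc by auto
      fix s t assume "s \<in> S" "t \<in> Gp S r"
      hence "s * t \<in> Gp S (Suc r)" by auto
      thus "s * t \<in> gen_ideal n (Gp S (Suc r))" by (rule subsetD[OF gen_ideal_base])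
    qed
  qed
qed

lemma Gp_GI: "Gp (GI n a b) r \<subseteq> ( {X (emb n (\<lambda>i. a * c i + b * j)) | c j. sum c {..<n} + j = r} :: 'k::comm_ring_1 mpoly set)"
proof (induction r)
  case 0
  have "(1::'k mpoly) = X (emb n (\<lambda>i. a * 0 + b * 0))" by (simp add: emb_zero X_0)
  hence "(1::'k mpoly) \<in> {X (emb n (\<lambda>i. a * c i + b * j)) | c j. sum c {..<n} + j = 0}"
    by (intro CollectI exI[of _ "\<lambda>_. 0"] exI[of _ 0]) simp
  thus ?case by simp
next
  case (Suc r)
  show ?case
  proof
    fix z :: "'k mpoly" assume "z \<in> Gp (GI n a b) (Suc r)"
    then obtain s g where z: "z = s * g" "s \<in> GI n a b" "g \<in> Gp (GI n a b) r" by auto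
    have "g \<in> {(X (emb n (\<lambda>i. a * c i + b * j)) :: 'k mpoly) | c j. sum c {..<n} + j = r}" using subsetD[OF Suc z(3)] .
    then obtain c j where g: "g = X (emb n (\<lambda>i. a * c i + b * j))" "sum c {..<n} + j = r" by auto
    show "z \<in> {X (emb n (\<lambda>i. a * c i + b * j)) | c j. sum c {..<n} + j = Suc r}"
    proof (cases "s = fm n b")
      case True
      have "z = X (emb n (\<lambda>i. a * c i + b * (Suc j)))"
        unfolding z g True fm_def X_emb_mult by (rule arg_cong[where f = X], rule emb_cong) simp
      thus ?thesis using g by (intro CollectI exI[of _ c] exI[of _ "Suc j"]) simp
    next
      case False
      then obtain i where i: "i < n" "s = pw i a" using z by (auto simp: GI_def)
      have "z = X (emb n (\<lambda>k. a * (c k + delta i k) + b * j))"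
        unfolding z g i pw_def single_emb_delta[OF i(1), of a b] X_emb_mult
        by (rule arg_cong[where f = X], rule emb_cong) (simp add: algebra_simps)
      moreover have "sum (\<lambda>k. c k + delta i k) {..<n} + j = Suc r"
        using g i by (simp add: sum.distrib sum_delta)
      ultimately show ?thesis by (intro CollectI exI[of _ "\<lambda>k. c k + delta i k"] exI[of _ j]) simp
    qed
  qed
qed

lemma Ipow_gen: "ideal_pow n (Iid n a b) r \<subseteq> gen_ideal n {(X (emb n (\<lambda>i. a * c i + b * j)) :: 'k::comm_ring_1 mpoly) | c j. sum c {..<n} + j = r}"
proof -
  have "Gp (GI n a b) r \<subseteq> gen_ideal n {(X (emb n (\<lambda>i. a * c i + b * j)) :: 'k mpoly) | c j. sum c {..<n} + j = r}"
    using Gp_GI gen_ideal_base by (rule subset_trans)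
  hence "gen_ideal n (Gp (GI n a b) r) \<subseteq> gen_ideal n {(X (emb n (\<lambda>i. a * c i + b * j)) :: 'k mpoly) | c j. sum c {..<n} + j = r}"
    by (intro gen_ideal_least gen_ideal_ideal) (auto intro!: polys_X keys_emb)
  with pow_gen[OF GI_polys] show ?thesis by (rule subset_trans)
qed

lemma NM:
  assumes "(X (emb n (\<lambda>_. Suc r * b)) :: 'k::comm_ring_1 mpoly) \<in> ideal_prod n (Jid n a) (ideal_pow n (Iid n a b) r)"
  shows "\<exists>m. 1 \<le> m \<and> m \<le> Suc r \<and> a \<le> m * b \<and> a \<le> n * b"
proof -
  have "emb n (\<lambda>_. Suc r * b) \<in> Bset n a b (Suc r) 1"
    using supp_setD[OF subsetD[OF JIpow_supp assms]] by simp
  then obtain c j where cj: "sum c {..<n} + j = Suc r" "1 \<le> sum c {..<n}"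
    "mle (emb n (\<lambda>i. a * c i + b * j)) (emb n (\<lambda>_. Suc r * b))"
    unfolding Bset_def by auto
  define m where "m = sum c {..<n}"
  have le: "a * c i \<le> b * m" if "i < n" for i
  proof -
    have "a * c i + b * j \<le> Suc r * b" using cj(3) that unfolding mle_def
      by (metis lookup_emb)
    moreover have "Suc r * b = b * m + b * j" using cj(1) by (simp add: m_def algebra_simps flip: distrib_left)
    ultimately show ?thesis by simp
  qed
  obtain i where i: "i < n" "0 < c i" using sum_pos_ex[of c n] cj(2) by auto
  have "a \<le> a * c i" using i by simp
  also have "\<dots> \<le> b * m" using le i by simp
  finally have am: "a \<le> m * b" by (simp add: mult.commute)
  have "a * m = (\<Sum>i<n. a * c i)" by (simp add: m_def sum_distrib_left)
  also have "\<dots> \<le> (\<Sum>i<n. b * m)" by (rule sum_mono) (simp add: le)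
  also have "\<dots> = (n * b) * m" by simp
  finally have "a * m \<le> (n * b) * m" .
  hence "a \<le> n * b" using cj(2) m_def by simp
  thus ?thesis using am cj(1,2) m_def by (intro exI[of _ m]) auto
qed

lemma fm_pow_in: "(X (emb n (\<lambda>_. Suc r * b)) :: 'k::comm_ring_1 mpoly) \<in> ideal_pow n (Iid n a b) (Suc r)"
proof -
  have "(X (emb n (\<lambda>i. a * 0 + b * Suc r)) :: 'k mpoly) \<in> ideal_pow n (Iid n a b) (Suc r)"
    by (rule MI) simp
  moreover have "emb n (\<lambda>i. a * 0 + b * Suc r) = emb n (\<lambda>_. Suc r * b)"
    by (rule emb_cong) simp
  ultimately show ?thesis by simp
qed

lemma a_nonred: assumes "n * b < a"
  shows "ideal_prod n (Jid n a) (ideal_pow n (Iid n a b) r) \<noteq> (ideal_pow n (Iid n a b) (Suc r) :: 'k::comm_ring_1 mpoly set)"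
proof
  assume eq: "ideal_prod n (Jid n a) (ideal_pow n (Iid n a b) r) = (ideal_pow n (Iid n a b) (Suc r) :: 'k mpoly set)"
  have "(X (emb n (\<lambda>_. Suc r * b)) :: 'k mpoly) \<in> ideal_prod n (Jid n a) (ideal_pow n (Iid n a b) r)"
    using fm_pow_in eq by simp
  from NM[OF this] assms show False by auto
qed

lemma p_props: fixes a b n p :: nat assumes "a \<le> n * b" "p = (LEAST p. 1 \<le> p \<and> p \<le> n \<and> a \<le> p * b)" "1 \<le> n"
  shows "1 \<le> p" "p \<le> n" "a \<le> p * b" "\<And>m. 1 \<le> m \<Longrightarrow> a \<le> m * b \<Longrightarrow> p \<le> m"
proof -
  have ex: "1 \<le> n \<and> n \<le> n \<and> a \<le> n * b" using assms by simp
  from LeastI[of "\<lambda>p. 1 \<le> p \<and> p \<le> n \<and> a \<le> p * b", OF ex]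
  show "1 \<le> p" "p \<le> n" "a \<le> p * b" using assms(2) by auto
  fix m assume m: "1 \<le> m" "a \<le> m * b"
  show "p \<le> m"
  proof (cases "m \<le> n")
    case True thus ?thesis using Least_le[of "\<lambda>p. 1 \<le> p \<and> p \<le> n \<and> a \<le> p * b" m] m assms(2) by auto
  next
    case False thus ?thesis using \<open>p \<le> n\<close> by simp
  qed
qed

lemma a_small: assumes "a \<le> n * b" "p = (LEAST p. 1 \<le> p \<and> p \<le> n \<and> a \<le> p * b)" "1 \<le> n" "Suc r < p"
  shows "ideal_prod n (Jid n a) (ideal_pow n (Iid n a b) r) \<noteq> (ideal_pow n (Iid n a b) (Suc r) :: 'k::comm_ring_1 mpoly set)"
proof
  assume eq: "ideal_prod n (Jid n a) (ideal_pow n (Iid n a b) r) = (ideal_pow n (Iid n a b) (Suc r) :: 'k mpoly set)"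
  have "(X (emb n (\<lambda>_. Suc r * b)) :: 'k mpoly) \<in> ideal_prod n (Jid n a) (ideal_pow n (Iid n a b) r)"
    using fm_pow_in eq by simp
  from NM[OF this] obtain m where "1 \<le> m" "m \<le> Suc r" "a \<le> m * b" by auto
  with p_props(4)[OF assms(1-3)] assms(4) show False by fastforce
qed

lemma sum_ind: "q < n \<Longrightarrow> (\<Sum>i<n. (if 0 < i \<and> i \<le> q then 1 else 0 :: nat)) = q"
proof -
  assume q: "q < n"
  have "(\<Sum>i<n. (if 0 < i \<and> i \<le> q then 1 else 0 :: nat)) = card ({..<n} \<inter> {i. 0 < i \<and> i \<le> q})"
    by (simp add: sum.If_cases)
  also have "{..<n} \<inter> {i. 0 < i \<and> i \<le> q} = {1..q}" using q by auto
  finally show ?thesis by simp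
qed

lemma a_red: assumes "Suc q \<le> n" "a \<le> Suc q * b"
  shows "ideal_prod n (Jid n a) (ideal_pow n (Iid n a b) q) = (ideal_pow n (Iid n a b) (Suc q) :: 'k::comm_ring_1 mpoly set)"
proof
  show "ideal_prod n (Jid n a) (ideal_pow n (Iid n a b) q) \<subseteq> (ideal_pow n (Iid n a b) (Suc q) :: 'k mpoly set)"
    unfolding ideal_pow.simps by (rule ideal_prod_mono[OF Iid_ideal Ipow_ideal J_sub_I]) simp
  have JI: "is_ideal n (ideal_prod n (Jid n a) (ideal_pow n (Iid n a b) q) :: 'k mpoly set)"
    by (rule ideal_prod_ideal[OF Jid_ideal Ipow_ideal])
  have "gen_ideal n {(X (emb n (\<lambda>i. a * c i + b * j)) :: 'k mpoly) | c j. sum c {..<n} + j = Suc q}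
     \<subseteq> ideal_prod n (Jid n a) (ideal_pow n (Iid n a b) q)"
  proof (rule gen_ideal_least[OF JI], rule subsetI)
    fix z :: "'k mpoly" assume "z \<in> {(X (emb n (\<lambda>i. a * c i + b * j)) :: 'k mpoly) | c j. sum c {..<n} + j = Suc q}"
    then obtain c j where z: "z = X (emb n (\<lambda>i. a * c i + b * j))" "sum c {..<n} + j = Suc q" by auto
    show "z \<in> ideal_prod n (Jid n a) (ideal_pow n (Iid n a b) q)"
    proof (cases "\<exists>i<n. 0 < c i")
      case True
      then obtain i where i: "i < n" "0 < c i" by auto
      define c' where "c' = c(i := c i - 1)"
      have cc: "\<And>k. c k = c' k + delta i k" using i by (simp add: c'_def delta_def)
      have "sum c {..<n} = sum c' {..<n} + 1" using i by (simp add: cc sum.distrib sum_delta)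
      hence sc: "sum c' {..<n} + j = q" using z by simp
      have "z = pw i a * X (emb n (\<lambda>i. a * c' i + b * j))"
        unfolding z pw_def single_emb_delta[OF i(1), of a b] X_emb_mult
        by (rule arg_cong[where f = X], rule emb_cong) (simp add: cc algebra_simps)
      moreover have "(X (emb n (\<lambda>i. a * c' i + b * j)) :: 'k mpoly) \<in> ideal_pow n (Iid n a b) q"
        by (rule MI[OF sc])
      ultimately show ?thesis using ideal_prod_mem[OF pw_in_J[OF i(1)]] by simp
    next
      case False
      hence c0: "\<And>i. i < n \<Longrightarrow> c i = 0" by auto
      hence "sum c {..<n} = 0" by simp
      hence j: "j = Suc q" using z by simp
      have n0: "0 < n" using assms by simp
      define c'' where "c'' = (\<lambda>i. if 0 < i \<and> i \<le> q then 1 else 0 :: nat)"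
      define rest where "rest = (\<lambda>i. Suc q * b - (if i \<le> q then a else 0))"
      have "z = pw 0 a * (X (emb n (\<lambda>i. a * c'' i + b * 0)) * X (emb n rest))"
        unfolding z pw_def single_emb_delta[OF n0, of a b] X_emb_mult
      proof (rule arg_cong[where f = X], rule emb_cong)
        fix i assume "i < n"
        thus "a * c i + b * j = a * delta 0 i + b * 0 + (a * c'' i + b * 0 + rest i)"
          using c0 assms(2) by (auto simp: j c''_def rest_def delta_def)
      qed
      moreover have "(X (emb n (\<lambda>i. a * c'' i + b * 0)) :: 'k mpoly) \<in> ideal_pow n (Iid n a b) q"
        by (rule MI) (use assms in \<open>simp add: c''_def sum_ind\<close>)
      hence "(X (emb n (\<lambda>i. a * c'' i + b * 0)) * X (emb n rest) :: 'k mpoly) \<in> ideal_pow n (Iid n a b) q"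
        by (rule ideal_mult2[OF Ipow_ideal polys_X[OF keys_emb]])
      ultimately show ?thesis using ideal_prod_mem[OF pw_in_J[OF n0]] by simp
    qed
  qed
  thus "(ideal_pow n (Iid n a b) (Suc q) :: 'k mpoly set) \<subseteq> ideal_prod n (Jid n a) (ideal_pow n (Iid n a b) q)"
    using Ipow_gen by (rule subset_trans[rotated])
qed

lemma Z_ideal: "is_ideal n {p \<in> polys n. \<forall>h\<in>polys n. Phi (F :: (nat \<Rightarrow>\<^sub>0 nat) \<Rightarrow> 'k::comm_ring_1) (h * p) = 0}"
  unfolding is_ideal_def
proof (intro conjI ballI)
  fix x y :: "'k mpoly" assume x: "x \<in> {p \<in> polys n. \<forall>h\<in>polys n. Phi F (h * p) = 0}"
    and y: "y \<in> {p \<in> polys n. \<forall>h\<in>polys n. Phi F (h * p) = 0}"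
  thus "x + y \<in> {p \<in> polys n. \<forall>h\<in>polys n. Phi F (h * p) = 0}"
    by (auto simp: distrib_left Phi_add intro: polys_add)
next
  fix r x :: "'k mpoly" assume r: "r \<in> polys n" and x: "x \<in> {p \<in> polys n. \<forall>h\<in>polys n. Phi F (h * p) = 0}"
  have "\<forall>h\<in>polys n. Phi F (h * (r * x)) = 0"
  proof
    fix h :: "'k mpoly" assume h: "h \<in> polys n"
    have "Phi F ((h * r) * x) = 0" using x polys_mult[OF h r] by simp
    thus "Phi F (h * (r * x)) = 0" by (simp add: mult.assoc)
  qed
  thus "r * x \<in> {p \<in> polys n. \<forall>h\<in>polys n. Phi F (h * p) = 0}" using r x by (auto intro: polys_mult)
qed auto

lemma Phi_gen_zero:
  fixes F :: "(nat \<Rightarrow>\<^sub>0 nat) \<Rightarrow> 'k::comm_ring_1"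
  assumes S: "S \<subseteq> polys n" and z: "\<And>s h. s \<in> S \<Longrightarrow> h \<in> polys n \<Longrightarrow> Phi F (h * s) = 0"
    and p: "p \<in> gen_ideal n S"
  shows "Phi F p = 0"
proof -
  have "gen_ideal n S \<subseteq> {p \<in> polys n. \<forall>h\<in>polys n. Phi F (h * p) = 0}"
    by (rule gen_ideal_least[OF Z_ideal]) (use S z in auto)
  thus ?thesis using p polys_one[of n] by fastforce
qed

lemma Phi_prod_zero:
  fixes F :: "(nat \<Rightarrow>\<^sub>0 nat) \<Rightarrow> 'k::comm_ring_1"
  assumes A: "is_ideal n A" and B: "is_ideal n B" and z: "\<And>x y. x \<in> A \<Longrightarrow> y \<in> B \<Longrightarrow> Phi F (x * y) = 0"
    and p: "p \<in> ideal_prod n A B"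
  shows "Phi F p = 0"
proof -
  have "ideal_prod n A B \<subseteq> {p \<in> polys n. \<forall>h\<in>polys n. Phi F (h * p) = 0}"
  proof (rule ideal_prod_least[OF Z_ideal])
    fix x y :: "'k mpoly" assume x: "x \<in> A" and y: "y \<in> B"
    have "x * y \<in> polys n" using x y A B by (auto dest!: ideal_sub intro: polys_mult)
    moreover have "\<forall>h\<in>polys n. Phi F (h * (x * y)) = 0"
    proof
      fix h :: "'k mpoly" assume h: "h \<in> polys n"
      have "Phi F ((h * x) * y) = 0" using z[OF ideal_mult[OF A h x] y] .
      thus "Phi F (h * (x * y)) = 0" by (simp add: mult.assoc)
    qed
    ultimately show "x * y \<in> {p \<in> polys n. \<forall>h\<in>polys n. Phi F (h * p) = 0}" by simp
  qed
  thus ?thesis using p polys_one[of n] by fastforce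
qed

lemma Phi_mult_X: "Phi F (h * X u) = (\<Sum>d\<in>ks h. lk h d * F (d + u))"
  by (simp add: Phi_mult lookup_X)

definition GQ :: "nat \<Rightarrow> nat \<Rightarrow> nat \<Rightarrow> 'k::comm_ring_1 mpoly set" where
  "GQ n a b = (\<lambda>i. pw i a - pw (n - 1) a) ` {..<n - 1} \<union> {fm n b}"

abbreviation Qid :: "nat \<Rightarrow> nat \<Rightarrow> nat \<Rightarrow> 'k::comm_ring_1 mpoly set" where
  "Qid n a b \<equiv> gen_ideal n (GQ n a b)"

lemma GQ_polys: "GQ n a b \<subseteq> polys n"
  by (auto simp: GQ_def polys_fm intro!: polys_diff polys_pw)

lemma Qid_ideal: "is_ideal n (Qid n a b)" by (rule gen_ideal_ideal[OF GQ_polys])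

lemma Q_sub_I: "1 \<le> n \<Longrightarrow> Qid n a b \<subseteq> Iid n a b"
  by (rule gen_ideal_least[OF Iid_ideal]) (auto simp: GQ_def fm_in_I intro!: ideal_diff[OF Iid_ideal] pw_in_I)

lemma dQ: assumes "i < n" shows "(pw i a - pw (n - 1) a :: 'k::comm_ring_1 mpoly) \<in> Qid n a b"
proof (cases "i = n - 1")
  case True thus ?thesis by (simp add: ideal_0[OF Qid_ideal])
next
  case False
  hence "(pw i a - pw (n - 1) a :: 'k mpoly) \<in> GQ n a b" using assms by (auto simp: GQ_def)
  thus ?thesis by (rule subsetD[OF gen_ideal_base])
qed

lemma pwdiff_in_Q: "i < n \<Longrightarrow> k < n \<Longrightarrow> (pw i a - pw k a :: 'k::comm_ring_1 mpoly) \<in> Qid n a b"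
proof -
  assume "i < n" "k < n"
  have "(pw i a - pw k a :: 'k mpoly) = (pw i a - pw (n - 1) a) - (pw k a - pw (n - 1) a)" by simp
  thus ?thesis using ideal_diff[OF Qid_ideal dQ[OF \<open>i < n\<close>] dQ[OF \<open>k < n\<close>]] by simp
qed

lemma fm_in_Q: "fm n b \<in> Qid n a b"
  by (rule subsetD[OF gen_ideal_base]) (simp add: GQ_def)

lemma allones: assumes "sum c {..<n} = n" "\<forall>i<n. 1 \<le> c i" shows "\<forall>i<n. c i = (1::nat)"
proof (rule ccontr)
  assume "\<not> (\<forall>i<n. c i = 1)"
  then obtain k where k: "k < n" "c k \<noteq> 1" by auto
  have "sum (\<lambda>_. 1::nat) {..<n} < sum c {..<n}"
    by (rule sum_strict_mono_ex1) (use assms k in \<open>auto intro!: bexI[of _ k]\<close>)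
  thus False using assms by simp
qed

lemma hasbig: assumes "sum c {..<n} = n" "j0 < n" "c j0 = (0::nat)" shows "\<exists>i<n. 2 \<le> c i"
proof (rule ccontr)
  assume "\<not> (\<exists>i<n. 2 \<le> c i)"
  hence le: "\<forall>i<n. c i \<le> 1" by auto
  have "sum c {..<n} < sum (\<lambda>_. 1::nat) {..<n}"
    by (rule sum_strict_mono_ex1) (use assms le in \<open>auto intro!: bexI[of _ j0]\<close>)
  thus False using assms by simp
qed

lemma pure_in_QI:
  assumes n: "1 \<le> n" and ab: "n * b \<le> a"
  shows "sum c {..<n} = n \<Longrightarrow> (X (emb n (\<lambda>i. a * c i + b * 0)) :: 'k::comm_ring_1 mpoly)
           \<in> ideal_prod n (Qid n a b) (ideal_pow n (Iid n a b) (n - 1))"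
proof (induction "card {i. i < n \<and> c i = 0}" arbitrary: c rule: less_induct)
  case less
  have QI: "is_ideal n (ideal_prod n (Qid n a b) (ideal_pow n (Iid n a b) (n - 1)) :: 'k mpoly set)"
    by (rule ideal_prod_ideal[OF Qid_ideal Ipow_ideal])
  show ?case
  proof (cases "\<forall>i<n. 1 \<le> c i")
    case True
    hence c1: "\<forall>i<n. c i = 1" using allones less.prems by blast
    have "(X (emb n (\<lambda>i. a * c i + b * 0)) :: 'k mpoly)
       = fm n b * (X (emb n (\<lambda>i. a * 0 + b * (n - 1))) * X (emb n (\<lambda>_. a - n * b)))"
      unfolding fm_def X_emb_mult
    proof (rule arg_cong[where f = X], rule emb_cong)
      fix i assume "i < n"
      have "b + (b * (n - 1) + (a - n * b)) = a" using n ab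
        by (cases n) (auto simp: algebra_simps)
      thus "a * c i + b * 0 = b + (a * 0 + b * (n - 1) + (a - n * b))" using c1 \<open>i < n\<close> by simp
    qed
    moreover have "(X (emb n (\<lambda>i. a * 0 + b * (n - 1))) :: 'k mpoly) \<in> ideal_pow n (Iid n a b) (n - 1)"
      by (rule MI) simp
    hence "(X (emb n (\<lambda>i. a * 0 + b * (n - 1))) * X (emb n (\<lambda>_. a - n * b)) :: 'k mpoly) \<in> ideal_pow n (Iid n a b) (n - 1)"
      by (rule ideal_mult2[OF Ipow_ideal polys_X[OF keys_emb]])
    ultimately show ?thesis using ideal_prod_mem[OF fm_in_Q] by simp
  next
    case False
    then obtain j0 where j0: "j0 < n" "c j0 = 0" by auto
    then obtain i0 where i0: "i0 < n" "2 \<le> c i0" using hasbig less.prems by blast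
    have ij: "i0 \<noteq> j0" using i0 j0 by auto
    define c1 where "c1 = c(i0 := c i0 - 1)"
    have cc1: "\<And>k. c k = c1 k + delta i0 k" using i0 by (simp add: c1_def delta_def)
    define c' where "c' = (\<lambda>k. c1 k + delta j0 k)"
    have s1: "sum c1 {..<n} + 0 = n - 1" using less.prems i0 by (simp add: cc1 sum.distrib sum_delta)
    have s': "sum c' {..<n} = n" using s1 j0 n by (simp add: c'_def sum.distrib sum_delta)
    define Y where "Y = (X (emb n (\<lambda>i. a * c1 i + b * 0)) :: 'k mpoly)"
    have Y: "Y \<in> ideal_pow n (Iid n a b) (n - 1)" unfolding Y_def by (rule MI[OF s1])
    have e1: "pw i0 a * Y = X (emb n (\<lambda>i. a * c i + b * 0))"
      unfolding Y_def pw_def single_emb_delta[OF i0(1), of a b] X_emb_mult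
      by (rule arg_cong[where f = X], rule emb_cong) (simp add: cc1 algebra_simps)
    have e2: "pw j0 a * Y = X (emb n (\<lambda>i. a * c' i + b * 0))"
      unfolding Y_def pw_def single_emb_delta[OF j0(1), of a b] X_emb_mult
      by (rule arg_cong[where f = X], rule emb_cong) (simp add: c'_def algebra_simps)
    have eq: "X (emb n (\<lambda>i. a * c i + b * 0)) = (pw i0 a - pw j0 a) * Y + X (emb n (\<lambda>i. a * c' i + b * 0))"
      using e1 e2 by (simp add: algebra_simps)
    have t1: "(pw i0 a - pw j0 a) * Y \<in> ideal_prod n (Qid n a b) (ideal_pow n (Iid n a b) (n - 1))"
      by (rule ideal_prod_mem[OF pwdiff_in_Q[OF i0(1) j0(1)] Y])
    have zeros: "{i. i < n \<and> c' i = 0} = {i. i < n \<and> c i = 0} - {j0}"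
      using i0 ij by (auto simp: c'_def c1_def delta_def)
    have "card {i. i < n \<and> c' i = 0} < card {i. i < n \<and> c i = 0}"
      unfolding zeros by (rule card_Diff1_less) (use j0 in auto)
    from less.hyps[OF this s'] have t2: "(X (emb n (\<lambda>i. a * c' i + b * 0)) :: 'k mpoly)
           \<in> ideal_prod n (Qid n a b) (ideal_pow n (Iid n a b) (n - 1))" .
    show ?thesis unfolding eq by (rule ideal_add[OF QI t1 t2])
  qed
qed

lemma b_red: assumes n: "2 \<le> n" and ab: "n * b \<le> a"
  shows "ideal_prod n (Qid n a b) (ideal_pow n (Iid n a b) (n - 1)) = (ideal_pow n (Iid n a b) n :: 'k::comm_ring_1 mpoly set)"
proof
  have nn: "n = Suc (n - 1)" using n by simp
  show "ideal_prod n (Qid n a b) (ideal_pow n (Iid n a b) (n - 1)) \<subseteq> (ideal_pow n (Iid n a b) n :: 'k mpoly set)"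
    by (subst (2) nn, unfold ideal_pow.simps) (rule ideal_prod_mono[OF Iid_ideal Ipow_ideal Q_sub_I], use n in auto)
  have QI: "is_ideal n (ideal_prod n (Qid n a b) (ideal_pow n (Iid n a b) (n - 1)) :: 'k mpoly set)"
    by (rule ideal_prod_ideal[OF Qid_ideal Ipow_ideal])
  have "gen_ideal n {(X (emb n (\<lambda>i. a * c i + b * j)) :: 'k mpoly) | c j. sum c {..<n} + j = n}
     \<subseteq> ideal_prod n (Qid n a b) (ideal_pow n (Iid n a b) (n - 1))"
  proof (rule gen_ideal_least[OF QI], rule subsetI)
    fix z :: "'k mpoly" assume "z \<in> {(X (emb n (\<lambda>i. a * c i + b * j)) :: 'k mpoly) | c j. sum c {..<n} + j = n}"
    then obtain c j where z: "z = X (emb n (\<lambda>i. a * c i + b * j))" "sum c {..<n} + j = n" by auto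
    show "z \<in> ideal_prod n (Qid n a b) (ideal_pow n (Iid n a b) (n - 1))"
    proof (cases "j = 0")
      case True
      thus ?thesis using pure_in_QI[of n b a c] z n ab by simp
    next
      case False
      have "z = fm n b * X (emb n (\<lambda>i. a * c i + b * (j - 1)))"
        unfolding z fm_def X_emb_mult
      proof (rule arg_cong[where f = X], rule emb_cong)
        have "b * j = b + b * (j - 1)" using False by (cases j) auto
        thus "a * c i + b * j = b + (a * c i + b * (j - 1))" for i by simp
      qed
      moreover have "(X (emb n (\<lambda>i. a * c i + b * (j - 1))) :: 'k mpoly) \<in> ideal_pow n (Iid n a b) (n - 1)"
        by (rule MI) (use z False in simp)
      ultimately show ?thesis using ideal_prod_mem[OF fm_in_Q] by simp
    qed
  qed
  thus "(ideal_pow n (Iid n a b) n :: 'k mpoly set) \<subseteq> ideal_prod n (Qid n a b) (ideal_pow n (Iid n a b) (n - 1))"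
    using Ipow_gen by (rule subset_trans[rotated])
qed

lemma F_shift: assumes a: "0 < a" and i: "i < n" and d: "ks d \<subseteq> {..<n}"
  shows "(\<exists>c. sum c {..<n} = Suc r \<and> d + Poly_Mapping.single i a = emb n (\<lambda>k. a * c k))
     \<longleftrightarrow> (\<exists>c. sum c {..<n} = r \<and> d = emb n (\<lambda>k. a * c k))"
proof
  assume "\<exists>c. sum c {..<n} = Suc r \<and> d + Poly_Mapping.single i a = emb n (\<lambda>k. a * c k)"
  then obtain c where c: "sum c {..<n} = Suc r" "d + Poly_Mapping.single i a = emb n (\<lambda>k. a * c k)" by auto
  have lk: "lk d k + (if i = k then a else 0) = (if k < n then a * c k else 0)" for k
    using arg_cong[OF c(2), of "\<lambda>e. lk e k"] by (simp add: lookup_add lookup_single lookup_emb when_def)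
  have "lk d i + a = a * c i" using lk[of i] i by simp
  hence "a \<le> a * c i" by linarith
  hence ci: "0 < c i" using a by (cases "c i") auto
  define c' where "c' = c(i := c i - 1)"
  have cc: "\<And>k. c k = c' k + delta i k" using ci by (simp add: c'_def delta_def)
  have "sum c' {..<n} = r" using c(1) i by (simp add: cc sum.distrib sum_delta)
  moreover have "d = emb n (\<lambda>k. a * c' k)"
  proof (rule poly_mapping_eqI)
    fix k
    show "lk d k = lk (emb n (\<lambda>k. a * c' k)) k"
    proof (cases "k < n")
      case True thus ?thesis using lk[of k] by (auto simp: lookup_emb c'_def algebra_simps diff_mult_distrib2)
    next
      case False
      hence "k \<notin> ks d" using d by auto
      thus ?thesis using False by (simp add: lookup_emb in_keys_iff)
    qed
  qed
  ultimately show "\<exists>c. sum c {..<n} = r \<and> d = emb n (\<lambda>k. a * c k)" by blast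
next
  assume "\<exists>c. sum c {..<n} = r \<and> d = emb n (\<lambda>k. a * c k)"
  then obtain c where c: "sum c {..<n} = r" "d = emb n (\<lambda>k. a * c k)" by auto
  have "d + Poly_Mapping.single i a = emb n (\<lambda>k. a * (c k + delta i k))"
    unfolding c(2) single_emb_delta[OF i, of a 0] emb_add by (rule emb_cong) (simp add: algebra_simps)
  moreover have "sum (\<lambda>k. c k + delta i k) {..<n} = Suc r" using c i by (simp add: sum.distrib sum_delta)
  ultimately show "\<exists>c. sum c {..<n} = Suc r \<and> d + Poly_Mapping.single i a = emb n (\<lambda>k. a * c k)" by blast
qed

lemma b_nonred: assumes r: "Suc r < n" and a: "0 < a" and b: "0 < b"
  shows "ideal_prod n (Qid n a b) (ideal_pow n (Iid n a b) r) \<noteq> (ideal_pow n (Iid n a b) (Suc r) :: 'k::comm_ring_1 mpoly set)"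
proof
  assume eq: "ideal_prod n (Qid n a b) (ideal_pow n (Iid n a b) r) = (ideal_pow n (Iid n a b) (Suc r) :: 'k mpoly set)"
  define F :: "(nat \<Rightarrow>\<^sub>0 nat) \<Rightarrow> 'k" where
    "F e = (if \<exists>c. sum c {..<n} = Suc r \<and> e = emb n (\<lambda>k. a * c k) then 1 else 0)" for e
  have Fs: "F (d + Poly_Mapping.single i a) = F (d + Poly_Mapping.single k a)"
    if "i < n" "k < n" "ks d \<subseteq> {..<n}" for d i k
    unfolding F_def using F_shift[OF a that(1,3)] F_shift[OF a that(2,3)] by simp
  have Ff: "F (d + emb n (\<lambda>_. b)) = 0" for d
  proof -
    have "\<not> (\<exists>c. sum c {..<n} = Suc r \<and> d + emb n (\<lambda>_. b) = emb n (\<lambda>k. a * c k))"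
    proof
      assume "\<exists>c. sum c {..<n} = Suc r \<and> d + emb n (\<lambda>_. b) = emb n (\<lambda>k. a * c k)"
      then obtain c where c: "sum c {..<n} = Suc r" "d + emb n (\<lambda>_. b) = emb n (\<lambda>k. a * c k)" by auto
      have "\<exists>i<n. c i = 0"
      proof (rule ccontr)
        assume "\<not> (\<exists>i<n. c i = 0)"
        hence "sum (\<lambda>_. 1::nat) {..<n} \<le> sum c {..<n}" by (intro sum_mono) (auto simp: Suc_le_eq)
        thus False using c r by simp
      qed
      then obtain i where i: "i < n" "c i = 0" by auto
      have "lk (d + emb n (\<lambda>_. b)) i = lk (emb n (\<lambda>k. a * c k)) i" using c(2) by simp
      thus False using i b by (simp add: lookup_add lookup_emb)
    qed
    thus ?thesis by (simp add: F_def)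
  qed
  have PQ: "Phi F p = 0" if "p \<in> Qid n a b" for p
  proof (rule Phi_gen_zero[OF GQ_polys _ that])
    fix s h :: "'k mpoly" assume s: "s \<in> GQ n a b" and h: "h \<in> polys n"
    have hk: "\<And>d. d \<in> ks h \<Longrightarrow> ks d \<subseteq> {..<n}" using h by (simp add: polys_iff)
    show "Phi F (h * s) = 0"
    proof (cases "s = fm n b")
      case True
      thus ?thesis by (simp add: fm_def Phi_mult_X Ff)
    next
      case False
      then obtain i where i: "i < n - 1" "s = pw i a - pw (n - 1) a" using s by (auto simp: GQ_def)
      have "Phi F (h * s) = (\<Sum>d\<in>ks h. lk h d * F (d + Poly_Mapping.single i a))
                          - (\<Sum>d\<in>ks h. lk h d * F (d + Poly_Mapping.single (n - 1) a))"
        by (simp add: i(2) right_diff_distrib Phi_diff pw_def Phi_mult_X)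
      also have "(\<Sum>d\<in>ks h. lk h d * F (d + Poly_Mapping.single i a))
               = (\<Sum>d\<in>ks h. lk h d * F (d + Poly_Mapping.single (n - 1) a))"
        by (rule sum.cong[OF refl]) (use Fs[of i "n - 1"] i hk in auto)
      finally show ?thesis by simp
    qed
  qed
  have d0: "sum (delta 0) {..<n} = 1" using r by (simp add: sum_delta)
  have "sum (\<lambda>k. Suc r * delta 0 k) {..<n} = Suc r * sum (delta 0) {..<n}" by (rule sum_distrib_left[symmetric])
  hence sd: "sum (\<lambda>k. Suc r * delta 0 k) {..<n} = Suc r" using d0 by simp
  define e where "e = emb n (\<lambda>k. a * (Suc r * delta 0 k) + b * 0)"
  have "(X e :: 'k mpoly) \<in> ideal_pow n (Iid n a b) (Suc r)"
    unfolding e_def by (rule MI) (simp only: sd add_0_right)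
  hence "(X e :: 'k mpoly) \<in> Qid n a b"
    using eq ideal_prod_sub_left[OF Qid_ideal Ipow_ideal] by blast
  hence "Phi F (X e) = 0" by (rule PQ)
  moreover have "F e = 1"
  proof -
    note sd
    moreover have "e = emb n (\<lambda>k. a * (Suc r * delta 0 k))" unfolding e_def by simp
    ultimately show ?thesis unfolding F_def by auto
  qed
  ultimately show False by (simp add: Phi_X)
qed

lemma sum_in_W:
  assumes add: "\<forall>u\<in>W. \<forall>v\<in>W. (\<lambda>i. u i + v i) \<in> W" and zero: "(\<lambda>_. 0) \<in> W"
  shows "finite A \<Longrightarrow> (\<forall>l\<in>A. f l \<in> W) \<Longrightarrow> (\<lambda>i. \<Sum>l\<in>A. f l i) \<in> W"
proof (induction A rule: finite_induct)
  case empty thus ?case using zero by simp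
next
  case (insert x F)
  hence "(\<lambda>i. f x i + (\<Sum>l\<in>F. f l i)) \<in> W" using add by auto
  thus ?case using insert by simp
qed

lemma span_all:
  fixes W :: "(nat \<Rightarrow> 'k::field) set"
  assumes add: "\<forall>u\<in>W. \<forall>v\<in>W. (\<lambda>i. u i + v i) \<in> W"
    and smul: "\<forall>u\<in>W. \<forall>c. (\<lambda>i. c * u i) \<in> W" and zero: "(\<lambda>_. 0) \<in> W"
    and hyp: "\<forall>lam. (\<exists>i<m. lam i \<noteq> 0) \<longrightarrow> (\<exists>w\<in>W. (\<Sum>i<m. lam i * w i) \<noteq> 0)"
  shows "\<forall>l<m. \<exists>w\<in>W. \<forall>i<m. w i = (if i = l then 1 else 0)"
  using assms
proof (induction m arbitrary: W)
  case 0 thus ?case by simp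
next
  case (Suc m)
  note add = Suc.prems(1) and smul = Suc.prems(2) and zero = Suc.prems(3) and hyp = Suc.prems(4)
  show ?case
  proof (cases "\<exists>w\<in>W. w m \<noteq> 0")
    case False
    have "\<exists>i<Suc m. (\<lambda>i. if i = m then 1 else 0 :: 'k) i \<noteq> 0" by auto
    from hyp[rule_format, OF this] obtain w where w: "w \<in> W" "(\<Sum>i<Suc m. (if i = m then 1 else 0) * w i) \<noteq> 0"
      by auto
    have "(\<Sum>i<Suc m. (if i = m then 1 else 0) * w i) = w m"
      by (simp add: if_distrib sum.delta cong: if_cong)
    thus ?thesis using w False by auto
  next
    case True
    then obtain w0 where w0: "w0 \<in> W" "w0 m \<noteq> 0" by auto
    define ws where "ws = (\<lambda>i. (1 / w0 m) * w0 i)"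
    have "ws \<in> W" unfolding ws_def using smul w0(1) by blast
    moreover have "ws m = 1" using w0 by (simp add: ws_def)
    ultimately have ws: "ws \<in> W" "ws m = 1" by auto
    define W' where "W' = {u \<in> W. u m = 0}"
    have add': "\<forall>u\<in>W'. \<forall>v\<in>W'. (\<lambda>i. u i + v i) \<in> W'" using add by (auto simp: W'_def)
    have smul': "\<forall>u\<in>W'. \<forall>c. (\<lambda>i. c * u i) \<in> W'" using smul by (auto simp: W'_def)
    have zero': "(\<lambda>_. 0) \<in> W'" using zero by (auto simp: W'_def)
    have hyp': "\<forall>lam. (\<exists>i<m. lam i \<noteq> 0) \<longrightarrow> (\<exists>w\<in>W'. (\<Sum>i<m. lam i * w i) \<noteq> 0)"
    proof (intro allI impI)
      fix lam :: "nat \<Rightarrow> 'k" assume "\<exists>i<m. lam i \<noteq> 0"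
      define lam2 where "lam2 = lam(m := - (\<Sum>i<m. lam i * ws i))"
      have "\<exists>i<Suc m. lam2 i \<noteq> 0" using \<open>\<exists>i<m. lam i \<noteq> 0\<close> by (auto simp: lam2_def)
      from hyp[rule_format, OF this] obtain w where w: "w \<in> W" "(\<Sum>i<Suc m. lam2 i * w i) \<noteq> 0" by auto
      define u where "u = (\<lambda>i. w i + (- w m) * ws i)"
      have mw: "(\<lambda>i. (- w m) * ws i) \<in> W" using smul ws(1) by blast
      have "u \<in> W" using add[rule_format, OF w(1) mw] unfolding u_def by simp
      moreover have "u m = 0" using ws by (simp add: u_def)
      ultimately have uW: "u \<in> W'" by (simp add: W'_def)
      have l2: "\<And>i. i < m \<Longrightarrow> lam2 i = lam i" by (simp add: lam2_def)
      have "(\<Sum>i<m. lam i * u i) = (\<Sum>i<m. lam i * w i) - w m * (\<Sum>i<m. lam i * ws i)"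
        by (simp add: u_def algebra_simps sum.distrib sum_distrib_left sum_subtractf)
      also have "(\<Sum>i<m. lam i * w i) = (\<Sum>i<m. lam2 i * w i)" by (simp add: l2)
      also have "\<dots> - w m * (\<Sum>i<m. lam i * ws i) = (\<Sum>i<Suc m. lam2 i * w i)"
        by (simp add: lam2_def)
      finally have "(\<Sum>i<m. lam i * u i) \<noteq> 0" using w(2) by simp
      thus "\<exists>w\<in>W'. (\<Sum>i<m. lam i * w i) \<noteq> 0" using uW by (intro bexI[of _ u])
    qed
    have IH: "\<forall>l<m. \<exists>w\<in>W'. \<forall>i<m. w i = (if i = l then 1 else 0)"
      using Suc.IH[OF add' smul' zero' hyp'] .
    then obtain E where E: "\<And>l. l < m \<Longrightarrow> E l \<in> W' \<and> (\<forall>i<m. E l i = (if i = l then 1 else 0))"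
      by metis
    show ?thesis
    proof (intro allI impI)
      fix l assume "l < Suc m"
      show "\<exists>w\<in>W. \<forall>i<Suc m. w i = (if i = l then 1 else 0)"
      proof (cases "l < m")
        case True
        then have "E l \<in> W'" "\<forall>i<m. E l i = (if i = l then 1 else 0)" using E by auto
        thus ?thesis using True by (intro bexI[of _ "E l"]) (auto simp: W'_def less_Suc_eq)
      next
        case False
        hence lm: "l = m" using \<open>l < Suc m\<close> by simp
        define v where "v = (\<lambda>i. ws i + (-1) * (\<Sum>k<m. ws k * E k i))"
        have "\<forall>k\<in>{..<m}. (\<lambda>i. ws k * E k i) \<in> W"
        proof
          fix k assume "k \<in> {..<m}"
          hence "E k \<in> W" using E by (auto simp: W'_def)
          thus "(\<lambda>i. ws k * E k i) \<in> W" using smul by blast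
        qed
        hence "(\<lambda>i. \<Sum>k<m. ws k * E k i) \<in> W"
          by (rule sum_in_W[OF add zero, of "{..<m}" "\<lambda>k i. ws k * E k i", simplified])
        from smul[rule_format, OF this, of "-1"] have mv: "(\<lambda>i. (-1) * (\<Sum>k<m. ws k * E k i)) \<in> W" by simp
        have "v \<in> W" using add[rule_format, OF ws(1) mv] unfolding v_def by simp
        moreover have "\<forall>i<Suc m. v i = (if i = l then 1 else 0)"
        proof (intro allI impI)
          fix i assume "i < Suc m"
          show "v i = (if i = l then 1 else 0)"
          proof (cases "i = m")
            case True
            have "\<And>k. k < m \<Longrightarrow> E k m = 0" using E by (auto simp: W'_def)
            thus ?thesis using True lm ws by (simp add: v_def)
          next
            case False
            hence im: "i < m" using \<open>i < Suc m\<close> by simp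
            have "(\<Sum>k<m. ws k * E k i) = (\<Sum>k<m. if k = i then ws i else 0)"
              by (rule sum.cong) (use E im in auto)
            also have "\<dots> = ws i" using im by simp
            finally show ?thesis using False lm by (simp add: v_def)
          qed
        qed
        ultimately show ?thesis by blast
      qed
    qed
  qed
qed

lemma C_add: "C (x + y) = C x + C y" by (simp add: C_def single_add)
lemma C_mult: "C (x * y) = C x * C y" by (simp add: C_def mult_single)
lemma C_0[simp]: "C 0 = 0" by (simp add: C_def)
lemma C_1[simp]: "C 1 = 1" by (simp add: C_def)
lemma C_X: "C c * X d = Poly_Mapping.single d c" by (simp add: C_def X_def mult_single)
lemma lookup_C: "lk (C c) e = (if e = 0 then c else 0)" by (simp add: C_def lookup_single when_def)

lemma poly_decomp_CX: "p = (\<Sum>d\<in>ks p. C (lk p d) * X d)"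
  by (subst poly_decomp) (simp add: C_X)

lemma wt_ge_deg: "\<forall>i<n. 1 \<le> w i \<Longrightarrow> wt n (\<lambda>_. 1) e \<le> wt n w e"
  unfolding wt_def by (intro sum_mono) simp

lemma deg_pos: assumes "d \<noteq> 0" "ks d \<subseteq> {..<n}" shows "1 \<le> wt n (\<lambda>_. 1) d"
proof -
  obtain i where "i \<in> ks d" using assms(1) by (metis all_not_in_conv keys_eq_empty)
  have i1: "i < n" using \<open>i \<in> ks d\<close> assms(2) by auto
  have i2: "lk d i \<noteq> 0" using \<open>i \<in> ks d\<close> by (simp add: in_keys_iff)
  note i = i1 i2
  have "lk d i \<le> (\<Sum>j<n. lk d j)" using i(1) by (intro member_le_sum) auto
  thus ?thesis using i by (simp add: wt_def)
qed

lemma all_ideal_in: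
  assumes K: "is_ideal n K" and p: "p \<in> polys n" and X: "\<And>d. d \<in> ks p \<Longrightarrow> X d \<in> K"
  shows "p \<in> K"
proof -
  have "(\<Sum>d\<in>ks p. C (lk p d) * X d) \<in> K"
    by (rule ideal_sum[OF K]) (use X K in \<open>auto intro: ideal_mult polys_C\<close>)
  thus ?thesis by (subst poly_decomp_CX)
qed

lemma nakayama:
  fixes g :: "nat \<Rightarrow> 'k::comm_ring_1 mpoly" and beta :: "nat \<Rightarrow> (nat \<Rightarrow>\<^sub>0 nat)"
  assumes gpoly: "\<And>l. l < n \<Longrightarrow> g l \<in> polys n"
    and gdelta: "\<And>l l'. l < n \<Longrightarrow> l' < n \<Longrightarrow> lk (g l) (beta l') = (if l = l' then 1 else 0)"
    and gord: "\<And>l d. l < n \<Longrightarrow> d \<in> ks (g l) \<Longrightarrow> D \<le> wt n w d"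
    and bwt: "\<And>l. l < n \<Longrightarrow> wt n w (beta l) = D"
    and wpos: "\<And>i. i < n \<Longrightarrow> 0 < w i"
    and K: "is_ideal n K" "K \<subseteq> gen_ideal n (g ` {..<n})"
    and span: "\<And>l. l < n \<Longrightarrow> \<exists>k\<in>K. \<forall>l'<n. lk k (beta l') = (if l = l' then 1 else 0)"
    and big: "\<And>e. ks e \<subseteq> {..<n} \<Longrightarrow> Nb \<le> wt n (\<lambda>_. 1) e \<Longrightarrow> X e \<in> K"
  shows "K = gen_ideal n (g ` {..<n})"
proof -
  define P where "P = gen_ideal n (g ` {..<n})"
  define deg where "deg = wt n (\<lambda>_. 1)"
  define PN where "PN N = gen_ideal n {X e * g l | e l. ks e \<subseteq> {..<n} \<and> N \<le> deg e \<and> l < n}" for N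
  have gP: "g ` {..<n} \<subseteq> polys n" using gpoly by auto
  have P_ideal: "is_ideal n P" unfolding P_def by (rule gen_ideal_ideal[OF gP])
  have gens_polys: "{X e * g l | e l. ks e \<subseteq> {..<n} \<and> N \<le> deg e \<and> l < n} \<subseteq> polys n" for N
    using gpoly by (auto intro!: polys_mult polys_X)
  have PN_ideal: "is_ideal n (PN N)" for N unfolding PN_def by (rule gen_ideal_ideal[OF gens_polys])
  have gl_P: "g l \<in> P" if "l < n" for l
    unfolding P_def using that by (intro subsetD[OF gen_ideal_base]) auto
  have PN_sub_P: "PN N \<subseteq> P" for N
    unfolding PN_def
    by (rule gen_ideal_least[OF P_ideal]) (auto intro!: ideal_mult[OF P_ideal] polys_X gl_P)
  have PN_gen: "X e * g l \<in> PN N" if "ks e \<subseteq> {..<n}" "N \<le> deg e" "l < n" for e l N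
    unfolding PN_def using that by (intro subsetD[OF gen_ideal_base]) auto
  have wge: "wt n (\<lambda>_. 1) e \<le> wt n w e" for e using wpos by (intro wt_ge_deg) (auto simp: Suc_le_eq)
  have H1: "PN 1 \<subseteq> supp_set n {d. D < wt n w d}"
    unfolding PN_def
  proof (rule gen_ideal_least[OF supp_ideal], simp add: wt_add, rule subsetI)
    fix z :: "'k mpoly" assume "z \<in> {X e * g l | e l. ks e \<subseteq> {..<n} \<and> 1 \<le> deg e \<and> l < n}"
    then obtain e l where z: "z = X e * g l" "ks e \<subseteq> {..<n}" "1 \<le> deg e" "l < n" by auto
    have "ks z \<subseteq> {d. D < wt n w d}"
    proof
      fix m assume "m \<in> ks z"
      then obtain d d' where m: "m = d + d'" "d \<in> ks (X e)" "d' \<in> ks (g l)" using keys_mult[of "X e" "g l"] z by auto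
      have "d = e" using m(2) by simp
      hence "1 \<le> wt n w d" using z(3) wge[of e] by (simp add: deg_def)
      moreover have "D \<le> wt n w d'" using gord[OF z(4) m(3)] .
      ultimately show "m \<in> {d. D < wt n w d}" using m(1) by (simp add: wt_add)
    qed
    moreover have "z \<in> polys n" using z gpoly by (auto intro!: polys_mult polys_X)
    ultimately show "z \<in> supp_set n {d. D < wt n w d}" by (simp add: supp_set_def)
  qed
  have lookPN1: "lk p (beta l) = 0" if "p \<in> PN 1" "l < n" for p l
  proof -
    have "beta l \<notin> ks p" using supp_setD[OF subsetD[OF H1 that(1)]] bwt[OF that(2)] by auto
    thus ?thesis by (simp add: in_keys_iff)
  qed
  have XPN: "X d * p \<in> PN (N + M)" if "ks d \<subseteq> {..<n}" "M \<le> deg d" "p \<in> PN N" for d p N M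
  proof -
    have "PN N \<subseteq> {p \<in> polys n. X d * p \<in> PN (N + M)}"
      unfolding PN_def[of N]
    proof (rule gen_ideal_least)
      show "is_ideal n {p \<in> polys n. X d * p \<in> PN (N + M)}"
        unfolding is_ideal_def using PN_ideal[of "N + M"]
        by (auto simp: distrib_left ideal_0 ideal_add intro: polys_add polys_mult)
           (metis ideal_mult mult.left_commute)
      show "{X e * g l | e l. ks e \<subseteq> {..<n} \<and> N \<le> deg e \<and> l < n} \<subseteq> {p \<in> polys n. X d * p \<in> PN (N + M)}"
      proof (rule subsetI)
        fix z :: "'k mpoly" assume "z \<in> {X e * g l | e l. ks e \<subseteq> {..<n} \<and> N \<le> deg e \<and> l < n}"
        then obtain e l where z: "z = X e * g l" "ks e \<subseteq> {..<n}" "N \<le> deg e" "l < n" by auto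
        have "X d * z = X (d + e) * g l" by (simp add: z(1) mult.assoc flip: X_mult)
        moreover have "ks (d + e) \<subseteq> {..<n}" using that(1) z(2) by (simp add: keys_add_nat)
        moreover have "N + M \<le> deg (d + e)" using that(2) z(3) by (simp add: deg_def wt_add)
        ultimately have "X d * z \<in> PN (N + M)" using PN_gen z(4) by simp
        moreover have "z \<in> polys n" using z gpoly by (auto intro!: polys_mult polys_X)
        ultimately show "z \<in> {p \<in> polys n. X d * p \<in> PN (N + M)}" by simp
      qed
    qed
    thus ?thesis using that(3) by auto
  qed
  have XP: "X d * q \<in> PN 1" if "d \<noteq> 0" "ks d \<subseteq> {..<n}" "q \<in> P" for d q
  proof -
    have dd: "1 \<le> deg d" using deg_pos[OF that(1,2)] by (simp add: deg_def)
    have "P \<subseteq> {q \<in> polys n. X d * q \<in> PN 1}"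
      unfolding P_def
    proof (rule gen_ideal_least)
      show "is_ideal n {p \<in> polys n. X d * p \<in> PN 1}"
        unfolding is_ideal_def using PN_ideal[of 1]
        by (auto simp: distrib_left ideal_0 ideal_add intro: polys_add polys_mult)
           (metis ideal_mult mult.left_commute)
      show "g ` {..<n} \<subseteq> {q \<in> polys n. X d * q \<in> PN 1}"
        using PN_gen[OF that(2) dd] gpoly by auto
    qed
    thus ?thesis using that(3) by auto
  qed
  have rP: "r * q - C (lk r 0) * q \<in> PN 1" if "r \<in> polys n" "q \<in> P" for r q
  proof -
    have "r - C (lk r 0) = (\<Sum>d\<in>ks r - {0}. C (lk r d) * X d)"
    proof (rule poly_mapping_eqI)
      fix e
      have "lk (\<Sum>d\<in>ks r - {0}. C (lk r d) * X d) e = (\<Sum>d\<in>ks r - {0}. if d = e then lk r d else 0)"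
        by (simp add: lookup_sum C_X lookup_single when_def)
      also have "\<dots> = (if e \<in> ks r - {0} then lk r e else 0)"
        by (simp add: sum.delta)
      also have "\<dots> = lk (r - C (lk r 0)) e"
        by (auto simp: lookup_minus lookup_C in_keys_iff)
      finally show "lk (r - C (lk r 0)) e = lk (\<Sum>d\<in>ks r - {0}. C (lk r d) * X d) e" by simp
    qed
    hence "r * q - C (lk r 0) * q = (\<Sum>d\<in>ks r - {0}. C (lk r d) * (X d * q))"
      by (simp add: left_diff_distrib[symmetric] sum_distrib_right mult.assoc)
    also have "\<dots> \<in> PN 1"
    proof (rule ideal_sum[OF PN_ideal])
      fix d assume d: "d \<in> ks r - {0}"
      hence "ks d \<subseteq> {..<n}" using that(1) by (auto simp: polys_iff)
      hence "X d * q \<in> PN 1" using d that(2) XP by auto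
      thus "C (lk r d) * (X d * q) \<in> PN 1" by (rule ideal_mult[OF PN_ideal polys_C])
    qed
    finally show ?thesis .
  qed
  define comb where "comb q = (\<Sum>l<n. C (lk q (beta l)) * g l)" for q
  have comb_P: "comb q \<in> P" for q
    unfolding comb_def by (rule ideal_sum[OF P_ideal]) (auto intro: ideal_mult[OF P_ideal polys_C] gl_P)
  have comb_add: "comb (x + y) = comb x + comb y" for x y
    by (simp add: comb_def lookup_add C_add distrib_right sum.distrib)
  have comb_0: "comb 0 = 0" by (simp add: comb_def)
  have comb_g: "comb (g l) = g l" if "l < n" for l
  proof -
    have "comb (g l) = (\<Sum>l'<n. if l' = l then g l' else 0)"
      unfolding comb_def by (rule sum.cong) (auto simp: gdelta that)
    thus ?thesis using that by simp
  qed
  have comb_delta: "comb k = g l" if "l < n" "\<forall>l'<n. lk k (beta l') = (if l = l' then 1 else 0)" for k l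
  proof -
    have "comb k = (\<Sum>l'<n. if l' = l then g l' else 0)"
      unfolding comb_def by (rule sum.cong) (use that in auto)
    thus ?thesis using that by simp
  qed
  have TA: "P \<subseteq> {q \<in> polys n. q - comb q \<in> PN 1}"
    unfolding P_def
  proof (rule gen_ideal_least)
    show "g ` {..<n} \<subseteq> {q \<in> polys n. q - comb q \<in> PN 1}"
      using gpoly comb_g ideal_0[OF PN_ideal] by auto
    show "is_ideal n {q \<in> polys n. q - comb q \<in> PN 1}"
      unfolding is_ideal_def
    proof (intro conjI ballI)
      show "{q \<in> polys n. q - comb q \<in> PN 1} \<subseteq> polys n" by auto
      show "0 \<in> {q \<in> polys n. q - comb q \<in> PN 1}" using comb_0 ideal_0[OF PN_ideal] by simp
      fix x y :: "'k mpoly" assume x: "x \<in> {q \<in> polys n. q - comb q \<in> PN 1}" and y: "y \<in> {q \<in> polys n. q - comb q \<in> PN 1}"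
      have e: "(x + y) - comb (x + y) = (x - comb x) + (y - comb y)" by (simp add: comb_add)
      have "(x + y) - comb (x + y) \<in> PN 1" unfolding e using x y by (intro ideal_add[OF PN_ideal]) auto
      moreover have "x + y \<in> polys n" using x y by (auto intro: polys_add)
      ultimately show "x + y \<in> {q \<in> polys n. q - comb q \<in> PN 1}" by simp
    next
      fix r x :: "'k mpoly" assume r: "r \<in> polys n" and x: "x \<in> {q \<in> polys n. q - comb q \<in> PN 1}"
      have xP: "x \<in> P"
      proof -
        have "x = (x - comb x) + comb x" by simp
        also have "\<dots> \<in> P"
        proof (rule ideal_add[OF P_ideal])
          show "x - comb x \<in> P" using x PN_sub_P[of 1] by auto
        qed (rule comb_P)
        finally show ?thesis .
      qed
      have rx: "r * x - C (lk r 0) * x \<in> PN 1" by (rule rP[OF r xP])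
      have lk_rx: "lk (r * x) (beta l) = lk r 0 * lk x (beta l)" if "l < n" for l
      proof -
        have "lk (r * x - C (lk r 0) * x) (beta l) = 0" by (rule lookPN1[OF rx that])
        thus ?thesis by (simp add: lookup_minus lookup_C_mult)
      qed
      have "comb (r * x) = C (lk r 0) * comb x"
        unfolding comb_def by (simp add: lk_rx C_mult sum_distrib_left mult.assoc)
      hence "r * x - comb (r * x) = (r * x - C (lk r 0) * x) + C (lk r 0) * (x - comb x)"
        by (simp add: algebra_simps)
      also have "\<dots> \<in> PN 1"
        using x by (intro ideal_add[OF PN_ideal] rx ideal_mult[OF PN_ideal polys_C]) auto
      finally show "r * x \<in> {q \<in> polys n. q - comb q \<in> PN 1}" using r x by (auto intro: polys_mult)
    qed
  qed
  have ClaimB: "\<exists>k\<in>K. g l - k \<in> PN 1" if lL: "l < n" for l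
  proof -
    obtain k where k: "k \<in> K" "\<forall>l'<n. lk k (beta l') = (if l = l' then 1 else 0)" using span[OF lL] by auto
    have "k \<in> P" using k(1) K(2) by (auto simp: P_def)
    hence "k - comb k \<in> PN 1" using TA by auto
    hence "k - g l \<in> PN 1" using comb_delta[OF lL k(2)] by simp
    hence "- (k - g l) \<in> PN 1" by (rule ideal_uminus[OF PN_ideal])
    thus ?thesis using k(1) by (intro bexI[of _ k]) auto
  qed
  have P_PN0: "P \<subseteq> PN 0"
    unfolding P_def
  proof (rule gen_ideal_least[OF PN_ideal], rule subsetI)
    fix z :: "'k mpoly" assume "z \<in> g ` {..<n}"
    then obtain l where "l < n" "z = g l" by auto
    thus "z \<in> PN 0" using PN_gen[of 0 0 l] by (simp add: X_0 deg_def)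
  qed
  have ClaimC: "\<forall>q\<in>P. \<exists>k\<in>K. q - k \<in> PN N" for N
  proof (induction N)
    case 0 thus ?case using P_PN0 ideal_0[OF K(1)] by (auto intro!: bexI[of _ 0])
  next
    case (Suc N)
    have Z: "PN N \<subseteq> {p \<in> polys n. \<exists>k\<in>K. p - k \<in> PN (Suc N)}"
      unfolding PN_def[of N]
    proof (rule gen_ideal_least)
      show "is_ideal n {p \<in> polys n. \<exists>k\<in>K. p - k \<in> PN (Suc N)}"
        unfolding is_ideal_def
      proof (intro conjI ballI)
        show "0 \<in> {p \<in> polys n. \<exists>k\<in>K. p - k \<in> PN (Suc N)}"
          using ideal_0[OF K(1)] ideal_0[OF PN_ideal, of "Suc N"] by (auto intro!: bexI[of _ 0])
        fix x y :: "'k mpoly" assume x: "x \<in> {p \<in> polys n. \<exists>k\<in>K. p - k \<in> PN (Suc N)}" and y: "y \<in> {p \<in> polys n. \<exists>k\<in>K. p - k \<in> PN (Suc N)}"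
        then obtain k1 k2 where k: "k1 \<in> K" "x - k1 \<in> PN (Suc N)" "k2 \<in> K" "y - k2 \<in> PN (Suc N)" by auto
        have e: "(x + y) - (k1 + k2) = (x - k1) + (y - k2)" by simp
        have "(x + y) - (k1 + k2) \<in> PN (Suc N)" unfolding e by (rule ideal_add[OF PN_ideal k(2) k(4)])
        thus "x + y \<in> {p \<in> polys n. \<exists>k\<in>K. p - k \<in> PN (Suc N)}"
          using x y k ideal_add[OF K(1) k(1) k(3)] by (auto intro: polys_add)
      next
        fix r x :: "'k mpoly" assume r: "r \<in> polys n" and x: "x \<in> {p \<in> polys n. \<exists>k\<in>K. p - k \<in> PN (Suc N)}"
        then obtain k where k: "k \<in> K" "x - k \<in> PN (Suc N)" by auto
        have e: "r * x - r * k = r * (x - k)" by (simp add: right_diff_distrib)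
        have "r * x - r * k \<in> PN (Suc N)" unfolding e by (rule ideal_mult[OF PN_ideal r k(2)])
        thus "r * x \<in> {p \<in> polys n. \<exists>k\<in>K. p - k \<in> PN (Suc N)}"
          using r x ideal_mult[OF K(1) r k(1)] by (auto intro: polys_mult)
      qed auto
      show "{X e * g l | e l. ks e \<subseteq> {..<n} \<and> N \<le> deg e \<and> l < n} \<subseteq> {p \<in> polys n. \<exists>k\<in>K. p - k \<in> PN (Suc N)}"
      proof (rule subsetI)
        fix z :: "'k mpoly" assume "z \<in> {X e * g l | e l. ks e \<subseteq> {..<n} \<and> N \<le> deg e \<and> l < n}"
        then obtain e l where z: "z = X e * g l" "ks e \<subseteq> {..<n}" "N \<le> deg e" "l < n" by auto
        obtain k where k: "k \<in> K" "g l - k \<in> PN 1" using ClaimB[OF z(4)] by auto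
        have "X e * (g l - k) \<in> PN (1 + N)" by (rule XPN[OF z(2) z(3) k(2)])
        hence "z - X e * k \<in> PN (Suc N)" by (simp add: z right_diff_distrib)
        moreover have "X e * k \<in> K" by (rule ideal_mult[OF K(1) polys_X[OF z(2)] k(1)])
        moreover have "z \<in> polys n" using z gpoly by (auto intro!: polys_mult polys_X)
        ultimately show "z \<in> {p \<in> polys n. \<exists>k\<in>K. p - k \<in> PN (Suc N)}" by auto
      qed
    qed
    show ?case
    proof
      fix q :: "'k mpoly" assume q: "q \<in> P"
      then obtain k where k: "k \<in> K" "q - k \<in> PN N" using Suc by auto
      then obtain k' where k': "k' \<in> K" "(q - k) - k' \<in> PN (Suc N)" using Z by auto
      have "q - (k + k') = (q - k) - k'" by simp
      hence "q - (k + k') \<in> PN (Suc N)" using k'(2) by (simp only:)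
      thus "\<exists>k\<in>K. q - k \<in> PN (Suc N)" using ideal_add[OF K(1) k(1) k'(1)] by (intro bexI[of _ "k + k'"])
    qed
  qed
  have ClaimD: "PN Nb \<subseteq> K"
  proof -
    have "PN Nb \<subseteq> supp_set n {d. Nb \<le> deg d}"
      unfolding PN_def
    proof (rule gen_ideal_least[OF supp_ideal], simp add: deg_def wt_add, rule subsetI)
      fix z :: "'k mpoly" assume "z \<in> {X e * g l | e l. ks e \<subseteq> {..<n} \<and> Nb \<le> deg e \<and> l < n}"
      then obtain e l where z: "z = X e * g l" "ks e \<subseteq> {..<n}" "Nb \<le> deg e" "l < n" by auto
      have "ks z \<subseteq> {d. Nb \<le> deg d}"
      proof
        fix m assume "m \<in> ks z"
        then obtain d d' where m: "m = d + d'" "d \<in> ks (X e)" "d' \<in> ks (g l)" using keys_mult[of "X e" "g l"] z by auto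
        thus "m \<in> {d. Nb \<le> deg d}" using z(3) by (simp add: deg_def wt_add)
      qed
      moreover have "z \<in> polys n" using z gpoly by (auto intro!: polys_mult polys_X)
      ultimately show "z \<in> supp_set n {d. Nb \<le> deg d}" by (simp add: supp_set_def)
    qed
    moreover have "supp_set n {d. Nb \<le> deg d} \<subseteq> K"
    proof
      fix p :: "'k mpoly" assume p: "p \<in> supp_set n {d. Nb \<le> deg d}"
      show "p \<in> K"
      proof (rule all_ideal_in[OF K(1)])
        show "p \<in> polys n" using p by (simp add: supp_set_def)
        fix d assume "d \<in> ks p"
        thus "X d \<in> K" using p big by (auto simp: supp_set_def polys_iff deg_def)
      qed
    qed
    ultimately show ?thesis by (rule subset_trans)
  qed
  have "P \<subseteq> K"
  proof
    fix q :: "'k mpoly" assume "q \<in> P"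
    then obtain k where k: "k \<in> K" "q - k \<in> PN Nb" using ClaimC by blast
    have "q = (q - k) + k" by simp
    also have "\<dots> \<in> K" using k ClaimD by (intro ideal_add[OF K(1)]) auto
    finally show "q \<in> K" .
  qed
  thus ?thesis using K(2) by (auto simp: P_def)
qed

lemma Phi_factor:
  assumes "\<And>d d'. d \<in> ks k \<Longrightarrow> d' \<in> ks h \<Longrightarrow> F (d + d') = G d * F' d'"
  shows "Phi F (k * h) = (\<Sum>d\<in>ks k. lk k d * G d) * Phi F' h"
proof -
  have "Phi F (k * h) = (\<Sum>d\<in>ks k. \<Sum>d'\<in>ks h. (lk k d * G d) * (lk h d' * F' d'))"
    unfolding Phi_mult by (intro sum.cong refl) (simp add: assms mult_ac)
  also have "\<dots> = (\<Sum>d\<in>ks k. lk k d * G d) * (\<Sum>d'\<in>ks h. lk h d' * F' d')"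
    by (simp add: sum_product)
  finally show ?thesis by (simp add: Phi_def)
qed

lemma G_sum:
  fixes lam :: "nat \<Rightarrow> 'k::comm_ring_1"
  shows "(\<Sum>d\<in>ks k. lk k d * (\<Sum>l<n. if d = beta l then lam l else 0)) = (\<Sum>l<n. lam l * lk k (beta l))"
proof -
  have "(\<Sum>d\<in>ks k. lk k d * (\<Sum>l<n. if d = beta l then lam l else 0))
      = (\<Sum>d\<in>ks k. \<Sum>l<n. if beta l = d then lk k (beta l) * lam l else 0)"
  proof (intro sum.cong refl)
    fix x
    show "lk k x * (\<Sum>l<n. if x = beta l then lam l else 0) = (\<Sum>l<n. if beta l = x then lk k (beta l) * lam l else 0)"
      unfolding sum_distrib_left by (intro sum.cong refl) auto
  qed
  also have "\<dots> = (\<Sum>l<n. \<Sum>d\<in>ks k. if beta l = d then lk k (beta l) * lam l else 0)"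
    by (rule sum.swap)
  also have "\<dots> = (\<Sum>l<n. lam l * lk k (beta l))"
    by (intro sum.cong refl) (auto simp: in_keys_iff)
  finally show ?thesis .
qed

lemma hyp_from_phi:
  fixes K :: "'k::comm_ring_1 mpoly set"
  assumes K: "is_ideal n K" and Ir: "is_ideal n Ir"
    and eq: "ideal_prod n K Ir = Ir1"
    and inner: "\<And>k h d d'. k \<in> K \<Longrightarrow> h \<in> Ir \<Longrightarrow> d \<in> ks k \<Longrightarrow> d' \<in> ks h \<Longrightarrow>
        F (d + d') = (\<Sum>l<n. if d = beta l then lam l else 0) * F' d'"
    and z: "z \<in> Ir1" "Phi F z \<noteq> 0"
  shows "\<exists>k\<in>K. (\<Sum>l<n. lam l * lk k (beta l)) \<noteq> 0"
proof (rule ccontr)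
  assume "\<not> (\<exists>k\<in>K. (\<Sum>l<n. lam l * lk k (beta l)) \<noteq> 0)"
  hence all0: "\<And>k. k \<in> K \<Longrightarrow> (\<Sum>l<n. lam l * lk k (beta l)) = 0" by auto
  have "Phi F z = 0"
  proof (rule Phi_prod_zero[OF K Ir])
    fix x y assume x: "x \<in> K" and y: "y \<in> Ir"
    have "Phi F (x * y) = (\<Sum>d\<in>ks x. lk x d * (\<Sum>l<n. if d = beta l then lam l else 0)) * Phi F' y"
      by (rule Phi_factor) (rule inner[OF x y])
    also have "\<dots> = 0" by (simp add: G_sum all0[OF x])
    finally show "Phi F (x * y) = 0" .
  qed (use z eq in auto)
  thus False using z by simp
qed

lemma single_inj: "0 < a \<Longrightarrow> Poly_Mapping.single i a = Poly_Mapping.single j (a::nat) \<longleftrightarrow> i = j"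
  by (metis lookup_single_eq lookup_single_not_eq neq0_conv)

lemma pure_pow_in: assumes "i < n"
  shows "(X (Poly_Mapping.single i (Suc r * a)) :: 'k::comm_ring_1 mpoly) \<in> ideal_pow n (Iid n a b) (Suc r)"
proof -
  have d: "sum (delta i) {..<n} = 1" using assms by (simp add: sum_delta)
  have "sum (\<lambda>k. Suc r * delta i k) {..<n} = Suc r * sum (delta i) {..<n}" by (rule sum_distrib_left[symmetric])
  hence s: "sum (\<lambda>k. Suc r * delta i k) {..<n} + 0 = Suc r" using d by simp
  have "(X (emb n (\<lambda>k. a * (Suc r * delta i k) + b * 0)) :: 'k mpoly) \<in> ideal_pow n (Iid n a b) (Suc r)"
    by (rule MI[OF s])
  moreover have "emb n (\<lambda>k. a * (Suc r * delta i k) + b * 0) = Poly_Mapping.single i (Suc r * a)"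
    by (simp add: single_emb[OF assms], rule emb_cong) (simp add: delta_def)
  ultimately show ?thesis by simp
qed

lemma big_in:
  fixes K :: "'k::comm_ring_1 mpoly set"
  assumes K: "is_ideal n K" and eq: "ideal_prod n K (ideal_pow n (Iid n a b) r) = ideal_pow n (Iid n a b) (Suc r)"
    and n: "1 \<le> n" and e: "ks e \<subseteq> {..<n}" "n * (a * Suc r) \<le> wt n (\<lambda>_. 1) e"
  shows "X e \<in> K"
proof -
  have "\<exists>i<n. a * Suc r \<le> lk e i"
  proof (rule ccontr)
    assume "\<not> (\<exists>i<n. a * Suc r \<le> lk e i)"
    hence "\<forall>i<n. lk e i < a * Suc r" by auto
    hence "(\<Sum>i<n. lk e i) < (\<Sum>i<n. a * Suc r)" using n by (intro sum_strict_mono) (auto simp: lessThan_empty_iff)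
    thus False using e(2) by (simp add: wt_def)
  qed
  then obtain i where i: "i < n" "a * Suc r \<le> lk e i" by auto
  define s where "s = Poly_Mapping.single i (Suc r * a)"
  have m: "mle s e" using i by (auto simp: mle_def s_def lookup_single when_def mult.commute)
  have Xe: "(X e :: 'k mpoly) = X s * X (e - s)" using mle_split[OF m] by (simp add: X_mult)
  have Xs: "(X s :: 'k mpoly) \<in> ideal_pow n (Iid n a b) (Suc r)" unfolding s_def by (rule pure_pow_in[OF i(1)])
  have ks: "ks (e - s) \<subseteq> {..<n}"
  proof
    fix x assume "x \<in> ks (e - s)"
    hence "lk e x \<noteq> 0" by (auto simp: in_keys_iff lookup_minus)
    hence "x \<in> ks e" by (simp add: in_keys_iff)
    thus "x \<in> {..<n}" using e(1) by auto
  qed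
  have "(X e :: 'k mpoly) \<in> ideal_pow n (Iid n a b) (Suc r)"
    unfolding Xe by (rule ideal_mult2[OF Ipow_ideal polys_X[OF ks] Xs])
  thus ?thesis using eq ideal_prod_sub_left[OF K Ipow_ideal] by blast
qed

lemma J_supp2: "Jid n a \<subseteq> supp_set n {d. \<exists>i<n. mle (Poly_Mapping.single i a) d}"
proof (rule gen_ideal_least[OF supp_ideal])
  show "\<And>d e. d \<in> {d. \<exists>i<n. mle (Poly_Mapping.single i a) d} \<Longrightarrow> d + e \<in> {d. \<exists>i<n. mle (Poly_Mapping.single i a) d}"
    using mle_add by blast
  show "GJ n a \<subseteq> supp_set n {d. \<exists>i<n. mle (Poly_Mapping.single i a) d}"
    by (auto simp: GJ_def supp_set_def pw_def polys_X mle_def)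
qed

lemma Ipow_deg: assumes ab: "a \<le> n * b" and h: "h \<in> ideal_pow n (Iid n a b) r" and d: "d' \<in> ks h"
  shows "a * r \<le> wt n (\<lambda>_. 1) d'"
proof -
  have "d' \<in> Bset n a b r 0" using supp_setD[OF subsetD[OF Ipow_supp h] d] .
  then obtain c j where cj: "sum c {..<n} + j = r" "mle (emb n (\<lambda>i. a * c i + b * j)) d'"
    unfolding Bset_def by auto
  have "wt n (\<lambda>_. 1) (emb n (\<lambda>i. a * c i + b * j)) = a * sum c {..<n} + (n * b) * j"
    by (simp add: wt_emb sum.distrib sum_distrib_left)
  also have "\<dots> \<ge> a * sum c {..<n} + a * j" using ab by simp
  also have "a * sum c {..<n} + a * j = a * r" using cj(1) by (simp add: distrib_left[symmetric])
  finally show ?thesis using wt_mono[OF cj(2), of n "\<lambda>_. 1"] by linarith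
qed

definition Fa :: "nat \<Rightarrow> nat \<Rightarrow> (nat \<Rightarrow> 'k::comm_ring_1) \<Rightarrow> nat \<Rightarrow> (nat \<Rightarrow>\<^sub>0 nat) \<Rightarrow> 'k" where
  "Fa n a lam s e = (if wt n (\<lambda>_. 1) e = a * s \<and> (\<forall>i<n. a dvd lk e i) then (\<Prod>i<n. lam i ^ (lk e i div a)) else 0)"

lemma G_single: fixes a :: nat and lam :: "nat \<Rightarrow> 'k::comm_ring_1" assumes "0 < a" "l < n"
  shows "(\<Sum>l'<n. if Poly_Mapping.single l a = Poly_Mapping.single l' a then lam l' else 0) = lam l"
proof -
  have "(\<Sum>l'<n. if Poly_Mapping.single l a = Poly_Mapping.single l' a then lam l' else 0) = (\<Sum>l'<n. if l = l' then lam l' else 0)"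
    by (intro sum.cong refl) (simp add: single_inj[OF assms(1)])
  thus ?thesis using assms(2) by simp
qed

lemma prod_delta_pow: fixes l n :: nat shows "l < n \<Longrightarrow> (\<Prod>i<n. (lam i :: 'k::comm_ring_1) ^ (if i = l then m else 0)) = lam l ^ m"
proof -
  assume l: "l < n"
  have "(\<Prod>i<n. lam i ^ (if i = l then m else 0)) = (\<Prod>i<n. if i = l then lam l ^ m else 1)"
    by (intro prod.cong refl) auto
  also have "\<dots> = (if l = l then lam l ^ m else 1) * (\<Prod>i\<in>{..<n} - {l}. if i = l then lam l ^ m else 1)"
    by (rule prod.remove) (use l in auto)
  also have "(\<Prod>i\<in>{..<n} - {l}. if i = l then lam l ^ m else 1) = 1"
    by (rule prod.neutral) auto
  finally show ?thesis by simp
qed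

lemma a_inner:
  fixes lam :: "nat \<Rightarrow> 'k::comm_ring_1"
  assumes a: "0 < a" and d: "\<exists>i<n. mle (Poly_Mapping.single i a) d" "ks d \<subseteq> {..<n}"
    and d': "a * r \<le> wt n (\<lambda>_. 1) d'"
  shows "Fa n a lam (Suc r) (d + d') = (\<Sum>l<n. if d = Poly_Mapping.single l a then lam l else 0) * Fa n a lam r d'"
proof (cases "\<exists>l<n. d = Poly_Mapping.single l a")
  case True
  then obtain l where l: "l < n" "d = Poly_Mapping.single l a" by auto
  have G: "(\<Sum>l'<n. if d = Poly_Mapping.single l' a then lam l' else 0) = lam l"
    using G_single[OF a l(1)] l(2) by simp
  have lk: "lk (d + d') i = (if i = l then a else 0) + lk d' i" for i
    by (simp add: l(2) lookup_add lookup_single when_def)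
  have wtd: "wt n (\<lambda>_. 1) (d + d') = a + wt n (\<lambda>_. 1) d'"
    by (simp add: wt_add l wt_single)
  have dvi: "a dvd lk (d + d') i \<longleftrightarrow> a dvd lk d' i" for i
    by (cases "i = l") (simp_all add: lk)
  have dv: "(\<forall>i<n. a dvd lk (d + d') i) \<longleftrightarrow> (\<forall>i<n. a dvd lk d' i)"
    using dvi by blast
  show ?thesis
  proof (cases "wt n (\<lambda>_. 1) d' = a * r \<and> (\<forall>i<n. a dvd lk d' i)")
    case True
    have "(\<Prod>i<n. lam i ^ (lk (d + d') i div a)) = (\<Prod>i<n. lam i ^ (if i = l then 1 else 0) * lam i ^ (lk d' i div a))"
    proof (intro prod.cong refl)
      fix i assume "i \<in> {..<n}"
      hence "a dvd lk d' i" using True by auto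
      hence "lk (d + d') i div a = (if i = l then 1 else 0) + lk d' i div a"
        using a by (auto simp: lk)
      thus "lam i ^ (lk (d + d') i div a) = lam i ^ (if i = l then 1 else 0) * lam i ^ (lk d' i div a)"
        by (simp add: power_add)
    qed
    also have "\<dots> = lam l * (\<Prod>i<n. lam i ^ (lk d' i div a))"
      by (simp add: prod.distrib prod_delta_pow[OF l(1), of lam 1])
    finally show ?thesis using True wtd dv G by (simp add: Fa_def)
  next
    case False
    thus ?thesis using wtd dv G by (auto simp: Fa_def)
  qed
next
  case False
  then have G: "(\<Sum>l<n. if d = Poly_Mapping.single l a then lam l else 0) = 0" by (intro sum.neutral) auto
  obtain i where i: "i < n" "mle (Poly_Mapping.single i a) d" using d by auto
  have "d \<noteq> Poly_Mapping.single i a" using False i by auto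
  hence "wt n (\<lambda>_. 1) (Poly_Mapping.single i a) < wt n (\<lambda>_. 1) d"
    using wt_strict[OF i(2) _ d(2)] by auto
  hence "a < wt n (\<lambda>_. 1) d" using i by (simp add: wt_single)
  hence "wt n (\<lambda>_. 1) (d + d') \<noteq> a * Suc r" using d' by (simp add: wt_add)
  thus ?thesis using G by (simp add: Fa_def)
qed

lemma a_hyp:
  fixes K :: "'k::field mpoly set"
  assumes a: "0 < a" and ab: "a \<le> n * b" and K: "is_ideal n K" "K \<subseteq> Jid n a"
    and eq: "ideal_prod n K (ideal_pow n (Iid n a b) r) = ideal_pow n (Iid n a b) (Suc r)"
  shows "\<forall>lam. (\<exists>i<n. lam i \<noteq> 0) \<longrightarrow> (\<exists>k\<in>K. (\<Sum>l<n. lam l * lk k (Poly_Mapping.single l a)) \<noteq> 0)"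
proof (intro allI impI)
  fix lam :: "nat \<Rightarrow> 'k" assume "\<exists>i<n. lam i \<noteq> 0"
  then obtain i0 where i0: "i0 < n" "lam i0 \<noteq> 0" by auto
  show "\<exists>k\<in>K. (\<Sum>l<n. lam l * lk k (Poly_Mapping.single l a)) \<noteq> 0"
  proof (rule hyp_from_phi[OF K(1) Ipow_ideal eq])
    fix k h d d' assume k: "k \<in> K" and h: "h \<in> ideal_pow n (Iid n a b) r" and d: "d \<in> ks k" and d': "d' \<in> ks h"
    have "d \<in> {d. \<exists>i<n. mle (Poly_Mapping.single i a) d}"
      using supp_setD[OF subsetD[OF J_supp2 subsetD[OF K(2) k]] d] .
    moreover have "ks d \<subseteq> {..<n}"
    proof -
      have "k \<in> polys n" using ideal_sub[OF K(1)] k by auto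
      thus ?thesis using d by (simp add: polys_iff)
    qed
    ultimately show "Fa n a lam (Suc r) (d + d') = (\<Sum>l<n. if d = Poly_Mapping.single l a then lam l else 0) * Fa n a lam r d'"
      using a_inner[OF a _ _ Ipow_deg[OF ab h d']] by simp
  next
    show "(X (Poly_Mapping.single i0 (Suc r * a)) :: 'k mpoly) \<in> ideal_pow n (Iid n a b) (Suc r)"
      by (rule pure_pow_in[OF i0(1)])
    have "Fa n a lam (Suc r) (Poly_Mapping.single i0 (Suc r * a)) = lam i0 ^ Suc r"
    proof -
      have "(\<Prod>i<n. lam i ^ (lk (Poly_Mapping.single i0 (Suc r * a)) i div a)) = (\<Prod>i<n. lam i ^ (if i = i0 then Suc r else 0))"
        by (intro prod.cong refl) (use a in \<open>simp add: lookup_single when_def\<close>)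
      also have "\<dots> = lam i0 ^ Suc r" by (rule prod_delta_pow[OF i0(1)])
      finally show ?thesis using i0(1) by (simp add: Fa_def wt_single lookup_single when_def mult.commute)
    qed
    thus "Phi (Fa n a lam (Suc r)) (X (Poly_Mapping.single i0 (Suc r * a))) \<noteq> 0"
      using i0(2) by (simp add: Phi_X)
  qed
qed

lemma a_minimal:
  fixes K :: "'k::field mpoly set"
  assumes n: "1 \<le> n" and a: "0 < a" and ab: "a \<le> n * b"
    and red: "is_reduction n K (Iid n a b)" and KJ: "K \<subseteq> Jid n a"
  shows "K = Jid n a"
proof -
  have K: "is_ideal n K" using red by (simp add: is_reduction_def)
  obtain r where eq: "ideal_prod n K (ideal_pow n (Iid n a b) r) = ideal_pow n (Iid n a b) (Suc r)"
    using red by (auto simp: is_reduction_def)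
  have gJ: "gen_ideal n ((\<lambda>l. pw l a) ` {..<n}) = (Jid n a :: 'k mpoly set)" by (simp add: GJ_def)
  let ?W = "(\<lambda>k l. lk k (Poly_Mapping.single l a)) ` K"
  have spanW: "\<forall>l<n. \<exists>w\<in>?W. \<forall>i<n. w i = (if i = l then 1 else 0)"
  proof (rule span_all)
    show "\<forall>u\<in>?W. \<forall>v\<in>?W. (\<lambda>i. u i + v i) \<in> ?W"
    proof (intro ballI)
      fix u v assume "u \<in> ?W" "v \<in> ?W"
      then obtain k1 k2 where "k1 \<in> K" "k2 \<in> K" "u = (\<lambda>l. lk k1 (Poly_Mapping.single l a))" "v = (\<lambda>l. lk k2 (Poly_Mapping.single l a))" by auto
      thus "(\<lambda>i. u i + v i) \<in> ?W" using ideal_add[OF K] by (auto simp: lookup_add intro!: image_eqI[of _ _ "k1 + k2"])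
    qed
    show "\<forall>u\<in>?W. \<forall>c. (\<lambda>i. c * u i) \<in> ?W"
    proof (intro ballI allI)
      fix u c assume "u \<in> ?W"
      then obtain k where "k \<in> K" "u = (\<lambda>l. lk k (Poly_Mapping.single l a))" by auto
      thus "(\<lambda>i. c * u i) \<in> ?W" using ideal_mult[OF K polys_C] by (auto simp: lookup_C_mult intro!: image_eqI[of _ _ "C c * k"])
    qed
    show "(\<lambda>_. 0) \<in> ?W" using ideal_0[OF K] by (auto intro!: image_eqI[of _ _ 0])
    show "\<forall>lam. (\<exists>i<n. lam i \<noteq> 0) \<longrightarrow> (\<exists>w\<in>?W. (\<Sum>i<n. lam i * w i) \<noteq> 0)"
      using a_hyp[OF a ab K KJ eq] by auto
  qed
  have "K = gen_ideal n ((\<lambda>l. pw l a) ` {..<n})"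
  proof (rule nakayama[where g = "\<lambda>l. pw l a" and beta = "\<lambda>l. Poly_Mapping.single l a" and D = a and w = "\<lambda>_. 1"
        and Nb = "n * (a * Suc r)"])
    show "\<And>l. l < n \<Longrightarrow> pw l a \<in> polys n" by (rule polys_pw)
    show "\<And>l l'. l < n \<Longrightarrow> l' < n \<Longrightarrow> lk (pw l a) (Poly_Mapping.single l' a) = (if l = l' then 1 else 0)"
      by (simp add: pw_def lookup_X single_inj[OF a] eq_commute)
    show "\<And>l d. l < n \<Longrightarrow> d \<in> ks (pw l a :: 'k mpoly) \<Longrightarrow> a \<le> wt n (\<lambda>_. 1) d"
      by (simp add: pw_def wt_single)
    show "\<And>l. l < n \<Longrightarrow> wt n (\<lambda>_. 1) (Poly_Mapping.single l a) = a" by (simp add: wt_single)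
    show "\<And>i. i < n \<Longrightarrow> 0 < (1::nat)" by simp
    show "is_ideal n K" by (rule K)
    show "K \<subseteq> gen_ideal n ((\<lambda>l. pw l a) ` {..<n})" using KJ gJ by simp
    show "\<And>l. l < n \<Longrightarrow> \<exists>k\<in>K. \<forall>l'<n. lk k (Poly_Mapping.single l' a) = (if l = l' then 1 else 0)"
    proof -
      fix l assume "l < n"
      from spanW[rule_format, OF this] obtain w where w: "w \<in> ?W" "\<forall>i<n. w i = (if i = l then 1 else 0)" by auto
      from w(1) obtain k where k: "k \<in> K" "w = (\<lambda>l. lk k (Poly_Mapping.single l a))" by auto
      have "\<forall>l'<n. lk k (Poly_Mapping.single l' a) = (if l = l' then 1 else 0)"
      proof (intro allI impI)
        fix l' assume "l' < n"
        hence "w l' = (if l' = l then 1 else 0)" using w(2) by simp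
        thus "lk k (Poly_Mapping.single l' a) = (if l = l' then 1 else 0)" using k(2) by (cases "l = l'") auto
      qed
      thus "\<exists>k\<in>K. \<forall>l'<n. lk k (Poly_Mapping.single l' a) = (if l = l' then 1 else 0)" using k(1) by (intro bexI[of _ k])
    qed
    show "\<And>e. ks e \<subseteq> {..<n} \<Longrightarrow> n * (a * Suc r) \<le> wt n (\<lambda>_. 1) e \<Longrightarrow> X e \<in> K"
      by (rule big_in[OF K eq n])
  qed
  thus ?thesis using gJ by simp
qed

definition wb :: "nat \<Rightarrow> nat \<Rightarrow> nat \<Rightarrow> nat \<Rightarrow> nat" where
  "wb n a b i = (if i < n - 1 then b else a - (n - 1) * b)"

definition betab :: "nat \<Rightarrow> nat \<Rightarrow> nat \<Rightarrow> nat \<Rightarrow> (nat \<Rightarrow>\<^sub>0 nat)" where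
  "betab n a b l = (if l < n - 1 then Poly_Mapping.single l a else emb n (\<lambda>_. b))"

definition UQ :: "nat \<Rightarrow> nat \<Rightarrow> nat \<Rightarrow> (nat \<Rightarrow>\<^sub>0 nat) set" where
  "UQ n a b = {d. mle (emb n (\<lambda>_. b)) d \<or> (\<exists>i<n. mle (Poly_Mapping.single i a) d)}"

locale bsetting =
  fixes n a b :: nat
  assumes n2: "2 \<le> n" and b0: "0 < b" and nba: "n * b < a"
begin

lemma a0: "0 < a" using nba by simp

lemma wlast: "b < a - (n - 1) * b"
proof -
  have "n * b = (n - 1) * b + b" using n2 by (cases n) auto
  thus ?thesis using nba by linarith
qed

lemma wlast_pos: "0 < a - (n - 1) * b" using wlast b0 by linarith
lemma wpos: "0 < wb n a b i" using b0 wlast_pos by (simp add: wb_def)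
lemma wge: "b \<le> wb n a b i" using wlast by (simp add: wb_def)

lemma sumw: "(\<Sum>i<n. wb n a b i) = a"
proof -
  have "n = Suc (n - 1)" using n2 by simp
  hence "(\<Sum>i<n. wb n a b i) = (\<Sum>i<n - 1. wb n a b i) + wb n a b (n - 1)"
    by (metis sum.lessThan_Suc)
  also have "(\<Sum>i<n - 1. wb n a b i) = (n - 1) * b" by (simp add: wb_def)
  also have "wb n a b (n - 1) = a - (n - 1) * b" by (simp add: wb_def)
  finally show ?thesis using wlast by simp
qed

abbreviation "D \<equiv> a * b"
abbreviation "W \<equiv> wt n (wb n a b)"

lemma wt_emb_b: "W (emb n (\<lambda>_. b)) = D"
proof -
  have "W (emb n (\<lambda>_. b)) = (\<Sum>i<n. wb n a b i * b)" by (simp add: wt_emb)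
  also have "\<dots> = (\<Sum>i<n. wb n a b i) * b" by (rule sum_distrib_right[symmetric])
  finally show ?thesis by (simp add: sumw)
qed

lemma wt_single_a: "i < n \<Longrightarrow> W (Poly_Mapping.single i a) = wb n a b i * a"
  by (simp add: wt_single)

lemma wt_single_lt: "i < n - 1 \<Longrightarrow> W (Poly_Mapping.single i a) = D"
  by (simp add: wt_single wb_def mult.commute)

lemma wt_single_last: "D < W (Poly_Mapping.single (n - 1) a)"
proof -
  have "W (Poly_Mapping.single (n - 1) a) = (a - (n - 1) * b) * a" using n2 by (simp add: wt_single wb_def)
  thus ?thesis using wlast a0 by (simp add: mult.commute)
qed

lemma emb_ne_single: "emb n (\<lambda>_. b) \<noteq> Poly_Mapping.single l a"
proof
  assume h: "emb n (\<lambda>_. b) = Poly_Mapping.single l a"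
  define i where "i = (if l = 0 then 1 else 0::nat)"
  have i: "i < 2" "i \<noteq> l" by (auto simp: i_def)
  have "lk (emb n (\<lambda>_. b)) i = lk (Poly_Mapping.single l a) i" using h by simp
  thus False using i n2 b0 by (simp add: lookup_emb lookup_single when_def)
qed

lemma betab_wt: "l < n \<Longrightarrow> W (betab n a b l) = D"
  by (simp add: betab_def wt_emb_b wt_single_lt)

lemma betab_inj: "l < n \<Longrightarrow> l' < n \<Longrightarrow> betab n a b l = betab n a b l' \<longleftrightarrow> l = l'"
proof
  assume l: "l < n" "l' < n" and e: "betab n a b l = betab n a b l'"
  show "l = l'"
  proof (cases "l < n - 1"; cases "l' < n - 1")
    assume "l < n - 1" "l' < n - 1"
    thus ?thesis using e single_inj[OF a0, of l l'] by (simp add: betab_def)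
  next
    assume "l < n - 1" "\<not> l' < n - 1"
    thus ?thesis using e emb_ne_single[of l] by (simp add: betab_def)
  next
    assume "\<not> l < n - 1" "l' < n - 1"
    thus ?thesis using e emb_ne_single[of l'] by (simp add: betab_def)
  next
    assume "\<not> l < n - 1" "\<not> l' < n - 1"
    thus ?thesis using l by simp
  qed
qed simp

lemma G_betab: "l < n \<Longrightarrow> (\<Sum>l'<n. if betab n a b l = betab n a b l' then lam l' else 0) = lam l"
proof -
  assume l: "l < n"
  have "(\<Sum>l'<n. if betab n a b l = betab n a b l' then lam l' else 0) = (\<Sum>l'<n. if l = l' then lam l' else 0)"
    by (intro sum.cong refl) (use l betab_inj in auto)
  thus ?thesis using l by simp
qed

lemma UQ_wt: assumes "d \<in> UQ n a b" "ks d \<subseteq> {..<n}"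
  shows "D \<le> W d" "W d = D \<Longrightarrow> \<exists>l<n. d = betab n a b l"
proof -
  have wp: "\<forall>i<n. 0 < wb n a b i" using wpos by auto
  { assume m: "mle (emb n (\<lambda>_. b)) d"
    have "D \<le> W d" using wt_mono[OF m, of n "wb n a b"] wt_emb_b by simp
    moreover have "W d = D \<Longrightarrow> \<exists>l<n. d = betab n a b l"
    proof -
      assume "W d = D"
      hence "emb n (\<lambda>_. b) = d" using mle_wt_eq[OF m assms(2) wp] wt_emb_b by simp
      moreover have "betab n a b (n - 1) = emb n (\<lambda>_. b)" by (simp add: betab_def)
      ultimately show ?thesis using n2 by (intro exI[of _ "n - 1"]) auto
    qed
    ultimately have "D \<le> W d \<and> (W d = D \<longrightarrow> (\<exists>l<n. d = betab n a b l))" by simp }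
  moreover
  { fix i assume i: "i < n" and m: "mle (Poly_Mapping.single i a) d"
    have w1: "D \<le> W (Poly_Mapping.single i a)" using wt_single_a[OF i] wge[of i] by (simp add: mult.commute)
    have "D \<le> W d" using wt_mono[OF m, of n "wb n a b"] w1 by simp
    moreover have "W d = D \<Longrightarrow> \<exists>l<n. d = betab n a b l"
    proof -
      assume e: "W d = D"
      hence "W d \<le> W (Poly_Mapping.single i a)" using w1 by simp
      hence "Poly_Mapping.single i a = d" using mle_wt_eq[OF m assms(2) wp] by simp
      moreover have "i < n - 1"
      proof (rule ccontr)
        assume "\<not> i < n - 1"
        hence "i = n - 1" using i by simp
        thus False using wt_single_last e wt_mono[OF m, of n "wb n a b"] by simp
      qed
      ultimately show ?thesis using i by (intro exI[of _ i]) (auto simp: betab_def)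
    qed
    ultimately have "D \<le> W d \<and> (W d = D \<longrightarrow> (\<exists>l<n. d = betab n a b l))" by simp }
  ultimately have "D \<le> W d \<and> (W d = D \<longrightarrow> (\<exists>l<n. d = betab n a b l))" using assms(1) unfolding UQ_def by blast
  thus "D \<le> W d" "W d = D \<Longrightarrow> \<exists>l<n. d = betab n a b l" by auto
qed

lemma wt_emb_ac: "W (emb n (\<lambda>i. a * c i + b * j)) = a * (\<Sum>i<n. wb n a b i * c i) + D * j"
proof -
  have "W (emb n (\<lambda>i. a * c i + b * j)) = (\<Sum>i<n. a * (wb n a b i * c i) + (b * j) * wb n a b i)"
    by (simp add: wt_emb algebra_simps)
  also have "\<dots> = a * (\<Sum>i<n. wb n a b i * c i) + (b * j) * (\<Sum>i<n. wb n a b i)"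
    by (simp add: sum.distrib sum_distrib_left)
  finally show ?thesis by (simp add: sumw)
qed

lemma sum_wc: "b * sum c {..<n} \<le> (\<Sum>i<n. wb n a b i * c i)"
  "b * sum c {..<n} = (\<Sum>i<n. wb n a b i * c i) \<Longrightarrow> c (n - 1) = 0"
proof -
  show "b * sum c {..<n} \<le> (\<Sum>i<n. wb n a b i * c i)"
    unfolding sum_distrib_left by (intro sum_mono) (simp add: wge)
  assume eq: "b * sum c {..<n} = (\<Sum>i<n. wb n a b i * c i)"
  show "c (n - 1) = 0"
  proof (rule ccontr)
    assume "c (n - 1) \<noteq> 0"
    have "(\<Sum>i<n. b * c i) < (\<Sum>i<n. wb n a b i * c i)"
    proof (rule sum_strict_mono_ex1)
      show "\<forall>i\<in>{..<n}. b * c i \<le> wb n a b i * c i" by (simp add: wge)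
      show "\<exists>i\<in>{..<n}. b * c i < wb n a b i * c i"
        using \<open>c (n - 1) \<noteq> 0\<close> n2 wlast by (intro bexI[of _ "n - 1"]) (auto simp: wb_def)
    qed simp
    thus False using eq by (simp add: sum_distrib_left)
  qed
qed

lemma Ipow_wt: assumes h: "h \<in> ideal_pow n (Iid n a b) r" and d: "d' \<in> ks h"
  shows "r * D \<le> W d'"
    "W d' = r * D \<Longrightarrow> \<exists>c j. c (n - 1) = 0 \<and> sum c {..<n} + j = r \<and> d' = emb n (\<lambda>i. a * c i + b * j)"
proof -
  have "d' \<in> Bset n a b r 0" using supp_setD[OF subsetD[OF Ipow_supp h] d] .
  then obtain c j where cj: "sum c {..<n} + j = r" "mle (emb n (\<lambda>i. a * c i + b * j)) d'"
    unfolding Bset_def by auto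
  have "h \<in> polys n" using ideal_sub[OF Ipow_ideal] h by blast
  hence kd: "ks d' \<subseteq> {..<n}" using d by (simp add: polys_iff)
  have lo: "r * D \<le> W (emb n (\<lambda>i. a * c i + b * j))"
  proof -
    have "r * D = a * (b * sum c {..<n}) + D * j" using cj(1) by (simp add: algebra_simps flip: distrib_left)
    thus ?thesis unfolding wt_emb_ac using sum_wc(1)[of c] by (simp add: mult_left_mono)
  qed
  show "r * D \<le> W d'" using lo wt_mono[OF cj(2), of n "wb n a b"] by simp
  assume e: "W d' = r * D"
  have "W d' \<le> W (emb n (\<lambda>i. a * c i + b * j))" using lo e by simp
  hence eqd: "emb n (\<lambda>i. a * c i + b * j) = d'" using mle_wt_eq[OF cj(2) kd] wpos by auto
  have "a * (b * sum c {..<n}) = a * (\<Sum>i<n. wb n a b i * c i)"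
  proof -
    have "r * D = a * (b * sum c {..<n}) + D * j" using cj(1) by (simp add: algebra_simps flip: distrib_left)
    thus ?thesis using e eqd wt_emb_ac[of c j] by simp
  qed
  hence "b * sum c {..<n} = (\<Sum>i<n. wb n a b i * c i)" using a0 by simp
  hence "c (n - 1) = 0" by (rule sum_wc(2))
  thus "\<exists>c j. c (n - 1) = 0 \<and> sum c {..<n} + j = r \<and> d' = emb n (\<lambda>i. a * c i + b * j)"
    using cj(1) eqd by blast
qed

lemma Q_supp: "Qid n a b \<subseteq> supp_set n (UQ n a b)"
proof (rule gen_ideal_least[OF supp_ideal])
  show "\<And>d e. d \<in> UQ n a b \<Longrightarrow> d + e \<in> UQ n a b" unfolding UQ_def using mle_add by blast
  show "GQ n a b \<subseteq> supp_set n (UQ n a b)"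
  proof
    fix z :: "'k::comm_ring_1 mpoly" assume z: "z \<in> GQ n a b"
    have "z \<in> polys n" using z GQ_polys by auto
    moreover have "ks z \<subseteq> UQ n a b"
    proof (cases "z = fm n b")
      case True thus ?thesis by (simp add: fm_def UQ_def mle_def)
    next
      case False
      then obtain i where i: "i < n - 1" "z = pw i a - pw (n - 1) a" using z by (auto simp: GQ_def)
      have "ks z \<subseteq> ks (pw i a :: 'k mpoly) \<union> ks (pw (n - 1) a :: 'k mpoly)"
        unfolding i(2) by (auto simp: in_keys_iff lookup_minus)
      also have "\<dots> \<subseteq> UQ n a b"
      proof -
        have "Poly_Mapping.single i a \<in> UQ n a b" unfolding UQ_def
          by (rule CollectI, rule disjI2, rule exI[of _ i]) (use i in \<open>simp add: mle_def\<close>)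
        moreover have "Poly_Mapping.single (n - 1) a \<in> UQ n a b" unfolding UQ_def
          by (rule CollectI, rule disjI2, rule exI[of _ "n - 1"]) (use n2 in \<open>simp add: mle_def\<close>)
        ultimately show ?thesis by (simp add: pw_def)
      qed
      finally show ?thesis .
    qed
    ultimately show "z \<in> supp_set n (UQ n a b)" by (simp add: supp_set_def)
  qed
qed

end

definition Fb :: "nat \<Rightarrow> nat \<Rightarrow> nat \<Rightarrow> (nat \<Rightarrow> 'k::comm_ring_1) \<Rightarrow> nat \<Rightarrow> (nat \<Rightarrow>\<^sub>0 nat) \<Rightarrow> 'k" where
  "Fb n a b lam s e = (if wt n (wb n a b) e = s * (a * b) \<and> b dvd lk e (n - 1) \<and>
      (\<forall>i<n - 1. lk e (n - 1) \<le> lk e i \<and> a dvd (lk e i - lk e (n - 1)))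
    then lam (n - 1) ^ (lk e (n - 1) div b) * (\<Prod>i<n - 1. lam i ^ ((lk e i - lk e (n - 1)) div a)) else 0)"

definition gb :: "nat \<Rightarrow> nat \<Rightarrow> nat \<Rightarrow> nat \<Rightarrow> 'k::comm_ring_1 mpoly" where
  "gb n a b l = (if l < n - 1 then pw l a - pw (n - 1) a else fm n b)"

context bsetting
begin

lemma sum_wc_eq: "c (n - 1) = 0 \<Longrightarrow> (\<Sum>i<n. wb n a b i * c i) = b * sum c {..<n}"
  unfolding sum_distrib_left
proof (intro sum.cong refl)
  fix i assume c: "c (n - 1) = 0" and "i \<in> {..<n}"
  hence "i < n - 1 \<or> i = n - 1" by auto
  thus "wb n a b i * c i = b * c i" using c by (auto simp: wb_def)
qed

lemma F_eval: assumes c: "c (n - 1) = 0"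
  shows "Fb n a b lam s (emb n (\<lambda>i. a * c i + b * j)) =
    (if sum c {..<n} + j = s then lam (n - 1) ^ j * (\<Prod>i<n - 1. lam i ^ c i) else 0)"
proof -
  let ?e = "emb n (\<lambda>i. a * c i + b * j)"
  have n1: "n - 1 < n" using n2 by simp
  have ln: "lk ?e (n - 1) = b * j" using n1 c by (simp add: lookup_emb)
  have li: "lk ?e i = a * c i + b * j" if "i < n - 1" for i
  proof -
    have "i < n" using that by linarith
    thus ?thesis by (simp add: lookup_emb)
  qed
  have wt: "W ?e = (sum c {..<n} + j) * D"
    unfolding wt_emb_ac sum_wc_eq[of c, OF c] by (simp add: algebra_simps)
  have D0: "0 < D" using a0 b0 by simp
  have cond: "W ?e = s * D \<longleftrightarrow> sum c {..<n} + j = s" unfolding wt using D0 by simp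
  have c2: "b dvd lk ?e (n - 1) \<and> (\<forall>i<n - 1. lk ?e (n - 1) \<le> lk ?e i \<and> a dvd (lk ?e i - lk ?e (n - 1)))"
    unfolding ln by (simp add: li)
  have v1: "lk ?e (n - 1) div b = j" unfolding ln using b0 by simp
  have v2: "(\<Prod>i<n - 1. lam i ^ ((lk ?e i - lk ?e (n - 1)) div a)) = (\<Prod>i<n - 1. lam i ^ c i)"
    unfolding ln by (intro prod.cong refl) (use a0 in \<open>simp add: li\<close>)
  show ?thesis unfolding Fb_def using cond c2 v1 v2 by simp
qed

lemma prod_shift: "l < n - 1 \<Longrightarrow> (\<Prod>i<n - 1. (lam i :: 'k::comm_ring_1) ^ (c i + delta l i)) = lam l * (\<Prod>i<n - 1. lam i ^ c i)"
proof -
  assume l: "l < n - 1"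
  have "(\<Prod>i<n - 1. lam i ^ (c i + delta l i)) = (\<Prod>i<n - 1. lam i ^ c i) * (\<Prod>i<n - 1. lam i ^ (if i = l then 1 else 0))"
    by (simp add: power_add prod.distrib delta_def)
  also have "(\<Prod>i<n - 1. lam i ^ (if i = l then 1 else 0)) = lam l" using prod_delta_pow[OF l, of lam 1] by simp
  finally show ?thesis by simp
qed

lemma inner_b:
  fixes lam :: "nat \<Rightarrow> 'k::comm_ring_1"
  assumes d: "d \<in> UQ n a b" "ks d \<subseteq> {..<n}" and h: "h \<in> ideal_pow n (Iid n a b) r" and d': "d' \<in> ks h"
  shows "Fb n a b lam (Suc r) (d + d') = (\<Sum>l<n. if d = betab n a b l then lam l else 0) * Fb n a b lam r d'"
proof -
  have Dd: "D \<le> W d" by (rule UQ_wt(1)[OF d])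
  have Dd': "r * D \<le> W d'" by (rule Ipow_wt(1)[OF h d'])
  have wsum: "W (d + d') = W d + W d'" by (simp add: wt_add)
  show ?thesis
  proof (cases "W d = D")
    case False
    hence "\<forall>l<n. d \<noteq> betab n a b l" using betab_wt by auto
    hence G: "(\<Sum>l<n. if d = betab n a b l then lam l else 0) = 0" by (intro sum.neutral) auto
    have "W (d + d') \<noteq> Suc r * D" using False Dd Dd' wsum by simp
    thus ?thesis using G by (simp add: Fb_def)
  next
    case True
    then obtain l0 where l0: "l0 < n" "d = betab n a b l0" using UQ_wt(2)[OF d] by auto
    have G: "(\<Sum>l<n. if d = betab n a b l then lam l else 0) = lam l0" using G_betab[OF l0(1)] l0(2) by simp
    show ?thesis
    proof (cases "W d' = r * D")
      case False
      have "W (d + d') \<noteq> Suc r * D" using False True wsum by simp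
      moreover have "Fb n a b lam r d' = 0" using False by (simp add: Fb_def)
      ultimately show ?thesis by (simp add: Fb_def)
    next
      case True
      then obtain c j where cj: "c (n - 1) = 0" "sum c {..<n} + j = r" "d' = emb n (\<lambda>i. a * c i + b * j)"
        using Ipow_wt(2)[OF h d'] by blast
      have F': "Fb n a b lam r d' = lam (n - 1) ^ j * (\<Prod>i<n - 1. lam i ^ c i)"
        using F_eval[of c lam r j, OF cj(1)] cj by simp
      show ?thesis
      proof (cases "l0 < n - 1")
        case True
        have l0n: "l0 \<noteq> n - 1" using True by simp
        have "d + d' = emb n (\<lambda>i. a * (c i + delta l0 i) + b * j)"
          unfolding cj(3) l0(2) betab_def using True
          by (simp add: single_emb_delta[OF l0(1), of a 0] emb_add, intro emb_cong) (simp add: algebra_simps)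
        moreover have "(\<lambda>i. c i + delta l0 i) (n - 1) = 0" using cj(1) l0n by (simp add: delta_def)
        moreover have "sum (\<lambda>i. c i + delta l0 i) {..<n} + j = Suc r" using cj(2) l0(1) by (simp add: sum.distrib sum_delta)
        ultimately have "Fb n a b lam (Suc r) (d + d') = lam (n - 1) ^ j * (\<Prod>i<n - 1. lam i ^ (c i + delta l0 i))"
          using F_eval[of "\<lambda>i. c i + delta l0 i" lam "Suc r" j] by simp
        also have "\<dots> = lam l0 * (lam (n - 1) ^ j * (\<Prod>i<n - 1. lam i ^ c i))"
          unfolding prod_shift[OF True] by (simp add: mult_ac)
        finally show ?thesis using G F' by simp
      next
        case False
        hence "d = emb n (\<lambda>_. b)" using l0 by (simp add: betab_def)
        hence "d + d' = emb n (\<lambda>i. a * c i + b * Suc j)"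
          unfolding cj(3) by (simp add: emb_add, intro emb_cong) (simp add: algebra_simps)
        hence "Fb n a b lam (Suc r) (d + d') = lam (n - 1) ^ Suc j * (\<Prod>i<n - 1. lam i ^ c i)"
          using F_eval[of c lam "Suc r" "Suc j", OF cj(1)] cj(2) by simp
        moreover have "l0 = n - 1" using False l0(1) by simp
        ultimately show ?thesis using G F' by simp
      qed
    qed
  qed
qed

end

context bsetting
begin

lemma b_hyp:
  fixes K :: "'k::field mpoly set"
  assumes K: "is_ideal n K" "K \<subseteq> Qid n a b"
    and eq: "ideal_prod n K (ideal_pow n (Iid n a b) r) = ideal_pow n (Iid n a b) (Suc r)"
  shows "\<forall>lam. (\<exists>i<n. lam i \<noteq> 0) \<longrightarrow> (\<exists>k\<in>K. (\<Sum>l<n. lam l * lk k (betab n a b l)) \<noteq> 0)"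
proof (intro allI impI)
  fix lam :: "nat \<Rightarrow> 'k" assume ex: "\<exists>i<n. lam i \<noteq> 0"
  have inner: "Fb n a b lam (Suc r) (d + d') = (\<Sum>l<n. if d = betab n a b l then lam l else 0) * Fb n a b lam r d'"
    if k: "k \<in> K" and h: "h \<in> ideal_pow n (Iid n a b) r" and d: "d \<in> ks k" and d': "d' \<in> ks h" for k h d d'
  proof (rule inner_b[OF _ _ h d'])
    show "d \<in> UQ n a b" using supp_setD[OF subsetD[OF Q_supp subsetD[OF K(2) k]] d] .
    have "k \<in> polys n" using ideal_sub[OF K(1)] k by auto
    thus "ks d \<subseteq> {..<n}" using d by (simp add: polys_iff)
  qed
  show "\<exists>k\<in>K. (\<Sum>l<n. lam l * lk k (betab n a b l)) \<noteq> 0"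
  proof (cases "lam (n - 1) = 0")
    case False
    define z where "z = (X (emb n (\<lambda>i. a * (\<lambda>_. 0) i + b * Suc r)) :: 'k mpoly)"
    have zin: "z \<in> ideal_pow n (Iid n a b) (Suc r)" unfolding z_def by (rule MI) simp
    have "Fb n a b lam (Suc r) (emb n (\<lambda>i. a * (\<lambda>_. 0) i + b * Suc r)) = lam (n - 1) ^ Suc r"
      using F_eval[of "\<lambda>_. 0" lam "Suc r" "Suc r"] by simp
    hence "Phi (Fb n a b lam (Suc r)) z \<noteq> 0" using False by (simp add: z_def Phi_X)
    from hyp_from_phi[OF K(1) Ipow_ideal eq inner zin this] show ?thesis .
  next
    case True
    then obtain l0 where l0: "l0 < n" "lam l0 \<noteq> 0" using ex by auto
    have l0': "l0 < n - 1" using l0 True by (cases "l0 = n - 1") auto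
    define c where "c = (\<lambda>i. Suc r * delta l0 i)"
    have d0: "sum (delta l0) {..<n} = 1" using l0 by (simp add: sum_delta)
    have "sum c {..<n} = Suc r * sum (delta l0) {..<n}" unfolding c_def by (rule sum_distrib_left[symmetric])
    hence sc: "sum c {..<n} = Suc r" using d0 by simp
    have cn: "c (n - 1) = 0" using l0' by (simp add: c_def delta_def)
    define z where "z = (X (emb n (\<lambda>i. a * c i + b * 0)) :: 'k mpoly)"
    have zin: "z \<in> ideal_pow n (Iid n a b) (Suc r)" unfolding z_def by (rule MI) (simp add: sc)
    have "(\<Prod>i<n - 1. lam i ^ c i) = lam l0 ^ Suc r"
    proof -
      have "(\<Prod>i<n - 1. lam i ^ c i) = (\<Prod>i<n - 1. lam i ^ (if i = l0 then Suc r else 0))"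
        by (intro prod.cong refl) (simp add: c_def delta_def)
      also have "\<dots> = lam l0 ^ Suc r" by (rule prod_delta_pow[OF l0'])
      finally show ?thesis .
    qed
    hence "Fb n a b lam (Suc r) (emb n (\<lambda>i. a * c i + b * 0)) = lam l0 ^ Suc r"
      using F_eval[of c lam "Suc r" 0, OF cn] sc by simp
    hence "Phi (Fb n a b lam (Suc r)) z \<noteq> 0" using l0(2) by (simp add: z_def Phi_X)
    from hyp_from_phi[OF K(1) Ipow_ideal eq inner zin this] show ?thesis .
  qed
qed

lemma gQ: "gen_ideal n (gb n a b ` {..<n}) = (Qid n a b :: 'k::comm_ring_1 mpoly set)"
proof -
  have e: "{..<n} = insert (n - 1) {..<n - 1}" using n2 by auto
  have "(gb n a b ` {..<n - 1} :: 'k mpoly set) = (\<lambda>i. pw i a - pw (n - 1) a) ` {..<n - 1}"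
    by (rule image_cong) (simp_all add: gb_def)
  moreover have "(gb n a b (n - 1) :: 'k mpoly) = fm n b" by (simp add: gb_def)
  ultimately have "(gb n a b ` {..<n} :: 'k mpoly set) = insert (fm n b) ((\<lambda>i. pw i a - pw (n - 1) a) ` {..<n - 1})"
    unfolding e image_insert by simp
  also have "\<dots> = GQ n a b" by (simp add: GQ_def)
  finally show ?thesis by simp
qed

lemma lk_pw: "lk (pw i a :: 'k::comm_ring_1 mpoly) e = (if e = Poly_Mapping.single i a then 1 else 0)"
  by (simp add: pw_def lookup_X)

lemma b_minimal:
  fixes K :: "'k::field mpoly set"
  assumes red: "is_reduction n K (Iid n a b)" and KQ: "K \<subseteq> Qid n a b"
  shows "K = Qid n a b"
proof -
  have K: "is_ideal n K" using red by (simp add: is_reduction_def)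
  obtain r where eq: "ideal_prod n K (ideal_pow n (Iid n a b) r) = ideal_pow n (Iid n a b) (Suc r)"
    using red by (auto simp: is_reduction_def)
  have n1: "1 \<le> n" using n2 by simp
  let ?W = "(\<lambda>k l. lk k (betab n a b l)) ` K"
  have spanW: "\<forall>l<n. \<exists>w\<in>?W. \<forall>i<n. w i = (if i = l then 1 else 0)"
  proof (rule span_all)
    show "\<forall>u\<in>?W. \<forall>v\<in>?W. (\<lambda>i. u i + v i) \<in> ?W"
    proof (intro ballI)
      fix u v assume "u \<in> ?W" "v \<in> ?W"
      then obtain k1 k2 where "k1 \<in> K" "k2 \<in> K" "u = (\<lambda>l. lk k1 (betab n a b l))" "v = (\<lambda>l. lk k2 (betab n a b l))" by auto
      thus "(\<lambda>i. u i + v i) \<in> ?W" using ideal_add[OF K] by (auto simp: lookup_add intro!: image_eqI[of _ _ "k1 + k2"])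
    qed
    show "\<forall>u\<in>?W. \<forall>c. (\<lambda>i. c * u i) \<in> ?W"
    proof (intro ballI allI)
      fix u c assume "u \<in> ?W"
      then obtain k where "k \<in> K" "u = (\<lambda>l. lk k (betab n a b l))" by auto
      thus "(\<lambda>i. c * u i) \<in> ?W" using ideal_mult[OF K polys_C] by (auto simp: lookup_C_mult intro!: image_eqI[of _ _ "C c * k"])
    qed
    show "(\<lambda>_. 0) \<in> ?W" using ideal_0[OF K] by (auto intro!: image_eqI[of _ _ 0])
    show "\<forall>lam. (\<exists>i<n. lam i \<noteq> 0) \<longrightarrow> (\<exists>w\<in>?W. (\<Sum>i<n. lam i * w i) \<noteq> 0)"
      using b_hyp[OF K KQ eq] by auto
  qed
  have sne: "Poly_Mapping.single l' a \<noteq> Poly_Mapping.single (n - 1) a" if "l' < n - 1" for l'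
    using that single_inj[OF a0, of l' "n - 1"] by simp
  have "K = gen_ideal n (gb n a b ` {..<n})"
  proof (rule nakayama[where g = "gb n a b" and beta = "betab n a b" and D = "a * b" and w = "wb n a b"
        and Nb = "n * (a * Suc r)"])
    show "\<And>l. l < n \<Longrightarrow> gb n a b l \<in> polys n"
      using n2 by (auto simp: gb_def intro!: polys_diff polys_pw polys_fm)
    show "\<And>l l'. l < n \<Longrightarrow> l' < n \<Longrightarrow> lk (gb n a b l :: 'k mpoly) (betab n a b l') = (if l = l' then 1 else 0)"
    proof -
      fix l l' assume l: "l < n" and l': "l' < n"
      show "lk (gb n a b l :: 'k mpoly) (betab n a b l') = (if l = l' then 1 else 0)"
      proof (cases "l < n - 1"; cases "l' < n - 1")
        assume h: "l < n - 1" "l' < n - 1"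
        thus ?thesis using sne[OF h(2)] single_inj[OF a0, of l' l]
          by (simp add: gb_def betab_def lookup_minus lk_pw eq_commute)
      next
        assume h: "l < n - 1" "\<not> l' < n - 1"
        thus ?thesis using emb_ne_single[of l] emb_ne_single[of "n - 1"]
          by (simp add: gb_def betab_def lookup_minus lk_pw)
      next
        assume h: "\<not> l < n - 1" "l' < n - 1"
        hence "l \<noteq> l'" by auto
        thus ?thesis using h emb_ne_single[of l']
          by (simp add: gb_def betab_def fm_def lookup_X)
      next
        assume h: "\<not> l < n - 1" "\<not> l' < n - 1"
        hence "l = l'" using l l' by simp
        thus ?thesis using h by (simp add: gb_def betab_def fm_def lookup_X)
      qed
    qed
    show "\<And>l d. l < n \<Longrightarrow> d \<in> ks (gb n a b l :: 'k mpoly) \<Longrightarrow> a * b \<le> W d"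
    proof -
      fix l d assume l: "l < n" and d: "d \<in> ks (gb n a b l :: 'k mpoly)"
      show "a * b \<le> W d"
      proof (cases "l < n - 1")
        case True
        have "ks (gb n a b l :: 'k mpoly) \<subseteq> ks (pw l a :: 'k mpoly) \<union> ks (pw (n - 1) a :: 'k mpoly)"
          using True by (auto simp: gb_def in_keys_iff lookup_minus)
        hence "d = Poly_Mapping.single l a \<or> d = Poly_Mapping.single (n - 1) a" using d by (auto simp: pw_def)
        moreover have "a * b \<le> W (Poly_Mapping.single i a)" if "i < n" for i
          using wt_single_a[OF that] wge[of i] by (simp add: mult.commute)
        ultimately show ?thesis using l n2 by auto
      next
        case False
        hence "d = emb n (\<lambda>_. b)" using d by (simp add: gb_def fm_def)
        thus ?thesis by (simp add: wt_emb_b)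
      qed
    qed
    show "\<And>l. l < n \<Longrightarrow> W (betab n a b l) = a * b" by (rule betab_wt)
    show "\<And>i. i < n \<Longrightarrow> 0 < wb n a b i" by (rule wpos)
    show "is_ideal n K" by (rule K)
    show "K \<subseteq> gen_ideal n (gb n a b ` {..<n})" by (subst gQ) (rule KQ)
    show "\<And>l. l < n \<Longrightarrow> \<exists>k\<in>K. \<forall>l'<n. lk k (betab n a b l') = (if l = l' then 1 else 0)"
    proof -
      fix l assume "l < n"
      from spanW[rule_format, OF this] obtain w where w: "w \<in> ?W" "\<forall>i<n. w i = (if i = l then 1 else 0)" by auto
      from w(1) obtain k where k: "k \<in> K" "w = (\<lambda>l. lk k (betab n a b l))" by auto
      have "\<forall>l'<n. lk k (betab n a b l') = (if l = l' then 1 else 0)"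
      proof (intro allI impI)
        fix l' assume "l' < n"
        hence "w l' = (if l' = l then 1 else 0)" using w(2) by simp
        thus "lk k (betab n a b l') = (if l = l' then 1 else 0)" using k(2) by (cases "l = l'") auto
      qed
      thus "\<exists>k\<in>K. \<forall>l'<n. lk k (betab n a b l') = (if l = l' then 1 else 0)" using k(1) by (intro bexI[of _ k])
    qed
    show "\<And>e. ks e \<subseteq> {..<n} \<Longrightarrow> n * (a * Suc r) \<le> wt n (\<lambda>_. 1) e \<Longrightarrow> X e \<in> K"
      by (rule big_in[OF K eq n1])
  qed
  thus ?thesis using gQ by simp
qed

end

theorem mainTheorem11:
  fixes n a b :: nat
  assumes "n \<ge> 2" and "0 < b" and "b < a"
  defines "I \<equiv> gen_ideal n ((\<lambda>i. Var i ^ a) ` {..<n} \<union> {(\<Prod>i<n. Var i) ^ b})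
              :: ('k::field) mpoly set"
      and "J \<equiv> gen_ideal n ((\<lambda>i. Var i ^ a) ` {..<n}) :: ('k::field) mpoly set"
      and "Q \<equiv> gen_ideal n ((\<lambda>i. Var i ^ a - Var (n - 1) ^ a) ` {..<n - 1}
                  \<union> {(\<Prod>i<n. Var i) ^ b}) :: ('k::field) mpoly set"
  shows "(minimal_reduction n J I \<longleftrightarrow> a \<le> n * b)
       \<and> (a \<le> n * b \<longrightarrow> red_num n J I = (LEAST p. 1 \<le> p \<and> p \<le> n \<and> a \<le> p * b) - 1)
       \<and> (n * b < a \<longrightarrow> minimal_reduction n Q I \<and> red_num n Q I = n - 1)"
proof -
  have n1: "1 \<le> n" using assms(1) by simp
  have a0: "0 < a" using assms by simp
  have I_eq: "I = Iid n a b" unfolding I_def GI_def by (simp add: Var_pw f_fm)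
  have J_eq: "J = Jid n a" unfolding J_def GJ_def by (simp add: Var_pw)
  have Q_eq: "Q = Qid n a b" unfolding Q_def GQ_def by (simp add: Var_pw f_fm)
  define p where "p = (LEAST p. 1 \<le> p \<and> p \<le> n \<and> a \<le> p * b)"
  have partA: "minimal_reduction n J I \<and> red_num n J I = p - 1" if ab: "a \<le> n * b"
  proof -
    have pp: "1 \<le> p" "p \<le> n" "a \<le> p * b" "\<And>m. 1 \<le> m \<Longrightarrow> a \<le> m * b \<Longrightarrow> p \<le> m"
      using p_props[OF ab p_def n1] by auto
    have ps: "Suc (p - 1) = p" using pp(1) by simp
    have eqp: "ideal_prod n (Jid n a) (ideal_pow n (Iid n a b) (p - 1)) = (ideal_pow n (Iid n a b) (Suc (p - 1)) :: 'k mpoly set)"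
      by (rule a_red) (use pp ps in auto)
    have red: "is_reduction n J I"
      unfolding is_reduction_def I_eq J_eq using Jid_ideal J_sub_I eqp by blast
    have min: "minimal_reduction n J I"
      unfolding minimal_reduction_def
    proof (intro conjI allI impI red)
      fix K :: "'k mpoly set" assume "is_reduction n K I \<and> K \<subseteq> J"
      thus "K = J" unfolding I_eq J_eq using a_minimal[OF n1 a0 ab] by blast
    qed
    have "red_num n J I = p - 1"
      unfolding red_num_def I_eq J_eq
    proof (rule Least_equality)
      show "ideal_prod n (Jid n a) (ideal_pow n (Iid n a b) (p - 1)) = (ideal_pow n (Iid n a b) (Suc (p - 1)) :: 'k mpoly set)"
        by (rule eqp)
      fix r assume eq: "ideal_prod n (Jid n a) (ideal_pow n (Iid n a b) r) = (ideal_pow n (Iid n a b) (Suc r) :: 'k mpoly set)"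
      show "p - 1 \<le> r"
      proof (rule ccontr)
        assume "\<not> p - 1 \<le> r"
        hence "Suc r < p" by simp
        from a_small[where 'k='k, OF ab p_def n1 this] eq show False by simp
      qed
    qed
    thus ?thesis using min by simp
  qed
  have partA2: "\<not> minimal_reduction n J I" if ab: "n * b < a"
  proof
    assume "minimal_reduction n J I"
    then obtain r where "ideal_prod n J (ideal_pow n I r) = ideal_pow n I (Suc r)"
      by (auto simp: minimal_reduction_def is_reduction_def)
    thus False using a_nonred[where 'k='k, OF ab, of r] unfolding I_eq J_eq by simp
  qed
  have partB: "minimal_reduction n Q I \<and> red_num n Q I = n - 1" if ab: "n * b < a"
  proof -
    interpret bsetting n a b using assms(1,2) ab by unfold_locales
    have ns: "Suc (n - 1) = n" using n1 by simp
    have eqn: "ideal_prod n (Qid n a b) (ideal_pow n (Iid n a b) (n - 1)) = (ideal_pow n (Iid n a b) (Suc (n - 1)) :: 'k mpoly set)"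
      using b_red[where 'k='k, OF assms(1), of b a] ab ns by simp
    have red: "is_reduction n Q I"
      unfolding is_reduction_def I_eq Q_eq using Qid_ideal Q_sub_I[OF n1] eqn by blast
    have min: "minimal_reduction n Q I"
      unfolding minimal_reduction_def
    proof (intro conjI allI impI red)
      fix K :: "'k mpoly set" assume "is_reduction n K I \<and> K \<subseteq> Q"
      thus "K = Q" unfolding I_eq Q_eq using b_minimal by blast
    qed
    have "red_num n Q I = n - 1"
      unfolding red_num_def I_eq Q_eq
    proof (rule Least_equality)
      show "ideal_prod n (Qid n a b) (ideal_pow n (Iid n a b) (n - 1)) = (ideal_pow n (Iid n a b) (Suc (n - 1)) :: 'k mpoly set)"
        by (rule eqn)
      fix r assume eq: "ideal_prod n (Qid n a b) (ideal_pow n (Iid n a b) r) = (ideal_pow n (Iid n a b) (Suc r) :: 'k mpoly set)"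
      show "n - 1 \<le> r"
      proof (rule ccontr)
        assume "\<not> n - 1 \<le> r"
        hence "Suc r < n" by simp
        from b_nonred[where 'k='k, OF this a0 assms(2)] eq show False by simp
      qed
    qed
    thus ?thesis using min by simp
  qed
  show ?thesis
  proof (intro conjI impI)
    show "minimal_reduction n J I \<longleftrightarrow> a \<le> n * b"
      using partA partA2 by (cases "a \<le> n * b") auto
    show "a \<le> n * b \<Longrightarrow> red_num n J I = (LEAST p. 1 \<le> p \<and> p \<le> n \<and> a \<le> p * b) - 1"
      using partA p_def by simp
    show "n * b < a \<Longrightarrow> minimal_reduction n Q I" using partB by simp
    show "n * b < a \<Longrightarrow> red_num n Q I = n - 1" using partB by simp
  qed
qed

end
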